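(* Under the standing setup, there exists a polynomial $p_4(x)$ such that for all sufficiently large $n$ and all $1\le j\le 2\ell$, $$\mu\otimes\mu\bigl(Q^j_{n,k}\bigr)\le p_4(n)^{k/n}e^{-2n(h(\mu)-\delta)}\gamma^{2\ell-j}.$$
   Context: Standing setup. $\mathcal{A}$ is a finite alphabet, $X\subset\mathcal{A}^{\mathbb{Z}}$ a non-trivial topologically mixing SFT with left shift $\sigma$, $f:X\to\mathbb{R}$ H\"older continuous with pressure $P=P_X(f)$, and $\mu$ the Gibbs measure (unique equilibrium state) of $f$, with entropy $h(\mu)$. $B_m(X)$ is the set of words of length $m$ in $X$; $[w]=\{x\in X:x_0\dots x_{|w|-1}=w\}$, $\mu(w)=\mu([w])$, and $\mu\otimes\mu(S)=\sum_{(u,v)\in S}\mu(u)\mu(v)$. Words are written $u=u_1\dots u_k$, $u_i^j=u_i\dots u_j$. $K>1$ is a constant such that: (i) for all $m\ge1$, $x\in X$: $K^{-1}\le\mu(x_0\dots x_{m-1})/\exp(-Pm+\sum_{i=0}^{m-1}f(\sigma^ix))\le K$; (ii) $\mu(uv)\le K\mu(u)\mu(v)$ and $\mu(\sigma^{-|u|}[v]\mid[u])\le K\mu(v)$ whenever $uv\in B(X)$. $\gamma_0=\inf\{\gamma>0:\exists n_0\ \forall m\ge n_0\ \forall u\in B_m(X),\ \mu(u)\le\gamma^m\}$. Parameters: $\alpha\in(\gamma_0,1]$; $\gamma\in(\gamma_0,\alpha)$; $n_0$ such that $\mu(u)\le\gamma^{|u|}$ for all $u\in B(X)$ with $|u|\ge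 n_0$; $n\ge n_0$; $0<\delta<\frac14\log(\alpha/\gamma)$; $k=k(n)$ with $n/k\to0$ and $k=o(n^2/\log n)$; $\ell=k-n+1$. For a word $u$ of length $\ge n$, $W_n(u)$ is the set of distinct subwords of $u$ of length $n$. $E_n=\{u\in B_n(X):|-\frac1n\log\mu(u)-h(\mu)|<\delta\}$, $G_{n,k}=\{u\in B_k(X): u_1^n=u_\ell^k\text{ and }u_1^n\in E_n\}$, $Q_{n,k}=\{(u,v)\in G_{n,k}\times G_{n,k}: W_n(u)\cap W_n(v)\neq\emptyset\}$, and $Q^j_{n,k}=\{(u,v)\in Q_{n,k}:|W_n(u)\cup W_n(v)|=j\}$. *)

theory Defs
  imports "HOL-Probability.Probability" "HOL-Computational_Algebra.Polynomial"
    "HOL-Library.Landau_Symbols"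
begin

definition shift :: "(int \<Rightarrow> 'a) \<Rightarrow> (int \<Rightarrow> 'a)" where
  "shift x = (\<lambda>i. x (i + 1))"

definition word_at :: "(int \<Rightarrow> 'a) \<Rightarrow> int \<Rightarrow> nat \<Rightarrow> 'a list" where
  "word_at x i m = map (\<lambda>j. x (i + int j)) [0..<m]"

definition is_sft :: "(int \<Rightarrow> 'a::finite) set \<Rightarrow> bool" where
  "is_sft X \<longleftrightarrow> (\<exists>F :: 'a list set. finite F \<and>
      X = {x. \<forall>i. \<forall>w\<in>F. word_at x i (length w) \<noteq> w})"

definition lang :: "(int \<Rightarrow> 'a) set \<Rightarrow> nat \<Rightarrow> 'a list set" where
  "lang X m = {w. \<exists>x\<in>X. word_at x 0 m = w}"

definition lang_all :: "(int \<Rightarrow> 'a) set \<Rightarrow> 'a list set" where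
  "lang_all X = (\<Union>m. lang X m)"

text \<open>Topological mixing, written out on the cylinder base of the product topology.\<close>
definition topologically_mixing :: "(int \<Rightarrow> 'a) set \<Rightarrow> bool" where
  "topologically_mixing X \<longleftrightarrow> (\<forall>u\<in>lang_all X. \<forall>v\<in>lang_all X. \<exists>N. \<forall>n\<ge>N.
      \<exists>x\<in>X. word_at x 0 (length u) = u \<and> word_at x (int (length u + n)) (length v) = v)"

definition shift_dist :: "(int \<Rightarrow> 'a) \<Rightarrow> (int \<Rightarrow> 'a) \<Rightarrow> real" where
  "shift_dist x y = (if x = y then 0
     else (1/2) ^ (LEAST m::nat. \<exists>i. \<bar>i\<bar> = int m \<and> x i \<noteq> y i))"

definition holder :: "(int \<Rightarrow> 'a) set \<Rightarrow> ((int \<Rightarrow> 'a) \<Rightarrow> real) \<Rightarrow> bool" where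
  "holder X f \<longleftrightarrow> (\<exists>C a. a > 0 \<and>
      (\<forall>x\<in>X. \<forall>y\<in>X. \<bar>f x - f y\<bar> \<le> C * shift_dist x y powr a))"

definition cyl :: "(int \<Rightarrow> 'a) set \<Rightarrow> 'a list \<Rightarrow> (int \<Rightarrow> 'a) set" where
  "cyl X w = {x\<in>X. word_at x 0 (length w) = w}"

definition cyl_at :: "(int \<Rightarrow> 'a) set \<Rightarrow> int \<Rightarrow> 'a list \<Rightarrow> (int \<Rightarrow> 'a) set" where
  "cyl_at X i w = {x\<in>X. word_at x i (length w) = w}"

definition cyl_sets :: "(int \<Rightarrow> 'a) set \<Rightarrow> (int \<Rightarrow> 'a) set set" where
  "cyl_sets X = {cyl_at X i w | i w. True}"

definition birkhoff :: "((int \<Rightarrow> 'a) \<Rightarrow> real) \<Rightarrow> nat \<Rightarrow> (int \<Rightarrow> 'a) \<Rightarrow> real" where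
  "birkhoff f m x = (\<Sum>i<m. f ((shift ^^ i) x))"

definition pressure :: "(int \<Rightarrow> 'a) set \<Rightarrow> ((int \<Rightarrow> 'a) \<Rightarrow> real) \<Rightarrow> real" where
  "pressure X f = lim (\<lambda>m. ln (\<Sum>w\<in>lang X m. exp (Sup (birkhoff f m ` cyl X w))) / real m)"

definition cp :: "(int \<Rightarrow> 'a) measure \<Rightarrow> (int \<Rightarrow> 'a) set \<Rightarrow> 'a list \<Rightarrow> real" where
  "cp \<mu> X w = measure \<mu> (cyl X w)"

text \<open>Shift-invariant Borel probability measure on X (Borel sets = sigma-algebra of cylinders).\<close>
definition shift_invariant_prob :: "(int \<Rightarrow> 'a) set \<Rightarrow> (int \<Rightarrow> 'a) measure \<Rightarrow> bool" where
  "shift_invariant_prob X \<mu> \<longleftrightarrow> prob_space \<mu> \<and> space \<mu> = X \<and>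
     sets \<mu> = sigma_sets X (cyl_sets X) \<and>
     (\<forall>A\<in>sets \<mu>. emeasure \<mu> {x\<in>X. shift x \<in> A} = emeasure \<mu> A)"

definition gibbs_measure :: "(int \<Rightarrow> 'a) set \<Rightarrow> ((int \<Rightarrow> 'a) \<Rightarrow> real) \<Rightarrow> (int \<Rightarrow> 'a) measure \<Rightarrow> bool" where
  "gibbs_measure X f \<mu> \<longleftrightarrow> shift_invariant_prob X \<mu> \<and>
     (\<exists>K>0. \<forall>m\<ge>1. \<forall>x\<in>X.
        inverse K \<le> cp \<mu> X (word_at x 0 m) / exp (- pressure X f * real m + birkhoff f m x) \<and>
        cp \<mu> X (word_at x 0 m) / exp (- pressure X f * real m + birkhoff f m x) \<le> K)"

text \<open>Measure-theoretic (Kolmogorov-Sinai) entropy h(mu), computed with the generating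
  partition into 1-cylinders.\<close>
definition ks_entropy :: "(int \<Rightarrow> 'a) set \<Rightarrow> (int \<Rightarrow> 'a) measure \<Rightarrow> real" where
  "ks_entropy X \<mu> = lim (\<lambda>m. - (\<Sum>w\<in>lang X m. cp \<mu> X w * ln (cp \<mu> X w)) / real m)"

definition gamma0 :: "(int \<Rightarrow> 'a) set \<Rightarrow> (int \<Rightarrow> 'a) measure \<Rightarrow> real" where
  "gamma0 X \<mu> = Inf {g::real. g > 0 \<and> (\<exists>n0. \<forall>m\<ge>n0. \<forall>u\<in>lang X m. cp \<mu> X u \<le> g ^ m)}"

definition subwords :: "nat \<Rightarrow> 'a list \<Rightarrow> 'a list set" where
  "subwords n u = {take n (drop i u) | i. i + n \<le> length u}"

definition E_set :: "(int \<Rightarrow> 'a) set \<Rightarrow> (int \<Rightarrow> 'a) measure \<Rightarrow> real \<Rightarrow> nat \<Rightarrow> 'a list set" where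
  "E_set X \<mu> \<delta> n = {u \<in> lang X n. \<bar>- (1 / real n) * ln (cp \<mu> X u) - ks_entropy X \<mu>\<bar> < \<delta>}"

text \<open>G_{n,k}: u_1^n = u_l^k (l = k-n+1), i.e. take n u = drop (k-n) u.\<close>
definition G_set :: "(int \<Rightarrow> 'a) set \<Rightarrow> (int \<Rightarrow> 'a) measure \<Rightarrow> real \<Rightarrow> nat \<Rightarrow> nat \<Rightarrow> 'a list set" where
  "G_set X \<mu> \<delta> n k = {u \<in> lang X k. take n u = drop (k - n) u \<and> take n u \<in> E_set X \<mu> \<delta> n}"

definition Q_set :: "(int \<Rightarrow> 'a) set \<Rightarrow> (int \<Rightarrow> 'a) measure \<Rightarrow> real \<Rightarrow> nat \<Rightarrow> nat \<Rightarrow> ('a list \<times> 'a list) set" where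
  "Q_set X \<mu> \<delta> n k = {(u, v) \<in> G_set X \<mu> \<delta> n k \<times> G_set X \<mu> \<delta> n k.
      subwords n u \<inter> subwords n v \<noteq> {}}"

definition Qj_set :: "(int \<Rightarrow> 'a) set \<Rightarrow> (int \<Rightarrow> 'a) measure \<Rightarrow> real \<Rightarrow> nat \<Rightarrow> nat \<Rightarrow> nat \<Rightarrow> ('a list \<times> 'a list) set" where
  "Qj_set X \<mu> \<delta> n k j = {(u, v) \<in> Q_set X \<mu> \<delta> n k. card (subwords n u \<union> subwords n v) = j}"

definition prodmeas :: "(int \<Rightarrow> 'a) measure \<Rightarrow> (int \<Rightarrow> 'a) set \<Rightarrow> ('a list \<times> 'a list) set \<Rightarrow> real" where
  "prodmeas \<mu> X S = (\<Sum>(u, v)\<in>S. cp \<mu> X u * cp \<mu> X v)"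

end

theory Submission
  imports Defs
begin


fun splitl :: "nat list \<Rightarrow> 'a list \<Rightarrow> 'a list list" where
  "splitl [] T = []"
| "splitl (l # ls) T = take l T # splitl ls (drop l T)"

lemma splitl_append:
  "length T1 = sum_list ls1 \<Longrightarrow> splitl (ls1 @ ls2) (T1 @ T2) = splitl ls1 T1 @ splitl ls2 T2"
  by (induction ls1 arbitrary: T1) auto

lemma concat_splitl: "length T = sum_list ls \<Longrightarrow> concat (splitl ls T) = T"
  by (induction ls arbitrary: T) auto

lemma length_splitl[simp]: "length (splitl ls T) = length ls"
  by (induction ls arbitrary: T) auto

definition st :: "(nat \<times> nat option) list \<Rightarrow> nat \<Rightarrow> nat" where
  "st bl k = sum_list (map fst (take k bl))"

definition valid :: "(nat \<times> nat option) list \<Rightarrow> 'a list \<Rightarrow> bool" where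
  "valid bl T \<longleftrightarrow> (\<forall>k < length bl. \<forall>q. snd (bl ! k) = Some q \<longrightarrow>
      q < st bl k \<and> (\<forall>t < fst (bl ! k). T ! (st bl k + t) = T ! (q + t)))"

definition credit :: "(nat \<times> nat option) list \<Rightarrow> nat" where
  "credit bl = sum_list (map (\<lambda>(l, ob). if ob = None then 0 else l) bl)"

lemma sum_lists_split:
  fixes F :: "'a list \<Rightarrow> real"
  shows "(\<Sum>T\<in>{T. length T = N + l}. F T) = (\<Sum>T1\<in>{T. length T = N}. \<Sum>T2\<in>{T. length T = l}. F (T1 @ T2))"
proof -
  have bij: "{T. length T = N + l} = (\<lambda>(a, b). a @ b) ` ({T. length T = N} \<times> {T. length T = l})"
  proof (rule set_eqI, rule iffI)
    fix T assume "T \<in> {T. length T = N + l}"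
    then show "T \<in> (\<lambda>(a, b). a @ b) ` ({T. length T = N} \<times> {T. length T = l})"
      by (intro image_eqI[of _ _ "(take N T, drop N T)"]) auto
  qed auto
  have inj: "inj_on (\<lambda>(a, b). a @ b) ({T::'a list. length T = N} \<times> {T. length T = l})"
    by (auto simp: inj_on_def)
  have "(\<Sum>T\<in>{T. length T = N + l}. F T) = (\<Sum>x\<in>{T. length T = N} \<times> {T. length T = l}. F (case x of (a, b) \<Rightarrow> a @ b))"
    by (subst bij, subst sum.reindex[OF inj]) (simp add: comp_def)
  also have "\<dots> = (\<Sum>T1\<in>{T. length T = N}. \<Sum>T2\<in>{T. length T = l}. F (T1 @ T2))"
    by (simp add: sum.cartesian_product split_def)
  finally show ?thesis .
qed

lemma copy_unique:
  assumes q: "q < length T1" and lT: "length T2 = l" "length T2' = l"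
    and c1: "\<forall>t<l. (T1 @ T2) ! (length T1 + t) = (T1 @ T2) ! (q + t)"
    and c2: "\<forall>t<l. (T1 @ T2') ! (length T1 + t) = (T1 @ T2') ! (q + t)"
  shows "T2 = T2'"
proof -
  have "\<forall>t'<t. t' < l \<longrightarrow> T2 ! t' = T2' ! t'" for t
  proof (induction t)
    case 0 then show ?case by simp
  next
    case (Suc t)
    have "T2 ! t = T2' ! t" if "t < l"
    proof -
      have e1: "T2 ! t = (T1 @ T2) ! (q + t)" using c1 that by (simp add: nth_append)
      have e2: "T2' ! t = (T1 @ T2') ! (q + t)" using c2 that by (simp add: nth_append)
      show ?thesis
      proof (cases "q + t < length T1")
        case True then show ?thesis using e1 e2 by (simp add: nth_append)
      next
        case False
        then have "q + t - length T1 < t" using q by simp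
        then have "T2 ! (q + t - length T1) = T2' ! (q + t - length T1)"
          using Suc that by auto
        then show ?thesis using e1 e2 False by (simp add: nth_append)
      qed
    qed
    then show ?case using Suc by (auto simp: less_Suc_eq)
  qed
  then show ?thesis using lT by (intro nth_equalityI) auto
qed

lemma st_snoc: "k \<le> length bl \<Longrightarrow> st (bl @ [x]) k = st bl k"
  by (simp add: st_def)

lemma st_le: "k < length bl \<Longrightarrow> st bl k + fst (bl ! k) \<le> sum_list (map fst bl)"
proof -
  assume k: "k < length bl"
  have "st bl k + fst (bl ! k) = sum_list (map fst (take (Suc k) bl))"
    using k by (simp add: st_def take_Suc_conv_app_nth)
  also have "\<dots> \<le> sum_list (map fst bl)"
  proof -
    have "map fst bl = map fst (take (Suc k) bl) @ map fst (drop (Suc k) bl)"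
      by (simp flip: map_append)
    then show ?thesis by (metis le_add1 sum_list_append)
  qed
  finally show ?thesis .
qed

lemma valid_snoc:
  assumes "length T1 = sum_list (map fst bl)"
  shows "valid (bl @ [(l, ob)]) (T1 @ T2) \<longleftrightarrow> valid bl T1 \<and>
     (\<forall>q. ob = Some q \<longrightarrow> q < length T1 \<and> (\<forall>t<l. (T1 @ T2) ! (length T1 + t) = (T1 @ T2) ! (q + t)))"
proof -
  have A: "(\<forall>t < fst (bl ! k). (T1 @ T2) ! (st bl k + t) = (T1 @ T2) ! (q + t)) \<longleftrightarrow>
           (\<forall>t < fst (bl ! k). T1 ! (st bl k + t) = T1 ! (q + t))"
    if "k < length bl" "q < st bl k" for k q
  proof -
    have "st bl k + fst (bl ! k) \<le> length T1" using st_le[OF that(1)] assms by simp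
    then show ?thesis using that(2) by (auto simp: nth_append)
  qed
  have stl: "st bl (length bl) = length T1"
    using assms by (simp add: st_def)
  have B: "(\<forall>t<l. (T1 @ T2) ! (st bl (length bl) + t) = (T1 @ T2) ! (q + t)) \<longleftrightarrow>
           (\<forall>t<l. (T1 @ T2) ! (length T1 + t) = (T1 @ T2) ! (q + t))" for q
    using stl by simp
  have "valid (bl @ [(l, ob)]) (T1 @ T2) \<longleftrightarrow>
     (\<forall>k < length bl. \<forall>q. snd (bl ! k) = Some q \<longrightarrow>
      q < st bl k \<and> (\<forall>t < fst (bl ! k). (T1 @ T2) ! (st bl k + t) = (T1 @ T2) ! (q + t))) \<and>
     (\<forall>q. ob = Some q \<longrightarrow> q < st bl (length bl) \<and>
        (\<forall>t<l. (T1 @ T2) ! (st bl (length bl) + t) = (T1 @ T2) ! (q + t)))"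
    unfolding valid_def by (auto simp: nth_append st_snoc less_Suc_eq)
  also have "\<dots> \<longleftrightarrow> valid bl T1 \<and>
     (\<forall>q. ob = Some q \<longrightarrow> q < length T1 \<and> (\<forall>t<l. (T1 @ T2) ! (length T1 + t) = (T1 @ T2) ! (q + t)))"
    unfolding valid_def B stl using A by blast
  finally show ?thesis .
qed

lemma sum_valid_le:
  fixes w :: "'a::finite list \<Rightarrow> real"
  assumes w0: "\<And>x. w x \<ge> 0"
    and w1: "\<And>m. (\<Sum>x\<in>{x. length x = m}. w x) \<le> 1"
    and wg: "\<And>x. length x \<ge> n1 \<Longrightarrow> w x \<le> g ^ length x"
    and g0: "g \<ge> 0"
  shows "(\<forall>(l, ob)\<in>set bl. ob \<noteq> None \<longrightarrow> l \<ge> n1) \<Longrightarrow>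
    (\<Sum>T\<in>{T. length T = sum_list (map fst bl)}.
       if valid bl T then prod_list (map w (splitl (map fst bl) T)) else 0) \<le> g ^ credit bl"
proof (induction bl rule: rev_induct)
  case Nil
  have "{T::'a list. length T = 0} = {[]}" by auto
  then show ?case by (simp add: valid_def credit_def)
next
  case (snoc x bl)
  obtain l ob where x: "x = (l, ob)" by fastforce
  define N where "N = sum_list (map fst bl)"
  define c where "c = (if ob = None then 1 else g ^ l)"
  define PiT where "PiT T1 = prod_list (map w (splitl (map fst bl) T1))" for T1
  define okp where "okp T1 T2 \<longleftrightarrow> (\<forall>q. ob = Some q \<longrightarrow> q < length T1 \<and>
      (\<forall>t<l. (T1 @ T2) ! (length T1 + t) = (T1 @ T2) ! (q + t)))" for T1 T2 :: "'a list"
  have IH: "(\<Sum>T\<in>{T. length T = N}. if valid bl T then PiT T else 0) \<le> g ^ credit bl"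
  proof -
    have "\<forall>(l, ob)\<in>set bl. ob \<noteq> None \<longrightarrow> l \<ge> n1" using snoc.prems by auto
    from snoc.IH[OF this] show ?thesis unfolding PiT_def N_def .
  qed
  have PiT0: "PiT T \<ge> 0" for T unfolding PiT_def by (rule prod_list_nonneg) (auto simp: w0)
  have inner: "(\<Sum>T2\<in>{T. length T = l}. if okp T1 T2 then w T2 else 0) \<le> c" if T1: "length T1 = N" for T1
  proof (cases ob)
    case None
    then have "(\<Sum>T2\<in>{T. length T = l}. if okp T1 T2 then w T2 else 0) = (\<Sum>T2\<in>{T. length T = l}. w T2)"
      by (simp add: okp_def)
    then show ?thesis using w1[of l] None by (simp add: c_def)
  next
    case (Some q)
    then have ln1: "l \<ge> n1" using snoc.prems x by auto
    let ?S = "{T2 \<in> {T. length T = l}. okp T1 T2}"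
    have fin: "finite {T::'a list. length T = l}"
      using finite_lists_length_eq[of "UNIV::'a set" l] by simp
    have eq: "(\<Sum>T2\<in>{T. length T = l}. if okp T1 T2 then w T2 else 0) = (\<Sum>T2\<in>?S. w T2)"
      using sum.inter_filter[OF fin, of w "okp T1", symmetric] by simp
    show ?thesis
    proof (cases "?S = {}")
      case True then show ?thesis using eq g0 by (simp add: c_def Some)
    next
      case False
      then obtain T0 where T0: "T0 \<in> ?S" by blast
      have "?S = {T0}"
      proof
        show "?S \<subseteq> {T0}"
        proof
          fix T2 assume "T2 \<in> ?S"
          then show "T2 \<in> {T0}" using T0 copy_unique[of q T1 T2 l T0]
            by (auto simp: okp_def Some)
        qed
      qed (use T0 in auto)
      moreover have "length T0 = l" using T0 by simp
      ultimately show ?thesis using eq wg[of T0] ln1 by (simp add: c_def Some)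
    qed
  qed
  have "(\<Sum>T\<in>{T. length T = sum_list (map fst (bl @ [x]))}.
          if valid (bl @ [x]) T then prod_list (map w (splitl (map fst (bl @ [x])) T)) else 0)
      = (\<Sum>T1\<in>{T. length T = N}. \<Sum>T2\<in>{T. length T = l}.
          if valid (bl @ [x]) (T1 @ T2) then prod_list (map w (splitl (map fst (bl @ [x])) (T1 @ T2))) else 0)"
    by (simp add: x N_def sum_lists_split)
  also have "\<dots> = (\<Sum>T1\<in>{T. length T = N}. (if valid bl T1 then PiT T1 else 0) *
                     (\<Sum>T2\<in>{T. length T = l}. if okp T1 T2 then w T2 else 0))"
  proof (rule sum.cong[OF refl])
    fix T1 assume T1: "T1 \<in> {T::'a list. length T = N}"
    show "(\<Sum>T2\<in>{T. length T = l}.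
          if valid (bl @ [x]) (T1 @ T2) then prod_list (map w (splitl (map fst (bl @ [x])) (T1 @ T2))) else 0)
        = (if valid bl T1 then PiT T1 else 0) * (\<Sum>T2\<in>{T. length T = l}. if okp T1 T2 then w T2 else 0)"
      unfolding sum_distrib_left
    proof (rule sum.cong[OF refl])
      fix T2 assume T2: "T2 \<in> {T::'a list. length T = l}"
      have v: "valid (bl @ [x]) (T1 @ T2) \<longleftrightarrow> valid bl T1 \<and> okp T1 T2"
        using valid_snoc[of T1 bl l ob T2] T1 by (simp add: x okp_def N_def)
      have p: "prod_list (map w (splitl (map fst (bl @ [x])) (T1 @ T2))) = PiT T1 * w T2"
        using T1 T2 by (simp add: x PiT_def splitl_append N_def)
      show "(if valid (bl @ [x]) (T1 @ T2) then prod_list (map w (splitl (map fst (bl @ [x])) (T1 @ T2))) else 0)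
          = (if valid bl T1 then PiT T1 else 0) * (if okp T1 T2 then w T2 else 0)"
        using v p by simp
    qed
  qed
  also have "\<dots> \<le> (\<Sum>T1\<in>{T. length T = N}. (if valid bl T1 then PiT T1 else 0) * c)"
    by (rule sum_mono) (use inner PiT0 in \<open>auto intro: mult_left_mono\<close>)
  also have "\<dots> = (\<Sum>T1\<in>{T. length T = N}. if valid bl T1 then PiT T1 else 0) * c"
    by (simp add: sum_distrib_right)
  also have "\<dots> \<le> g ^ credit bl * c"
    using IH g0 by (intro mult_right_mono) (auto simp: c_def)
  also have "\<dots> = g ^ credit (bl @ [x])"
    by (simp add: c_def credit_def x power_add)
  finally show ?case .
qed



function plens :: "nat \<Rightarrow> nat \<Rightarrow> nat list" where
  "plens b x = (if x = 0 then [] else if x < 2 * b \<or> b = 0 then [x] else b # plens b (x - b))"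
  by auto
termination by (relation "Wellfounded.measure snd") auto

declare plens.simps[simp del]

lemma sum_plens: "sum_list (plens b x) = x"
  by (induction b x rule: plens.induct) (subst plens.simps, auto)

lemma set_plens: "b > 0 \<Longrightarrow> x = 0 \<or> b \<le> x \<Longrightarrow> l \<in> set (plens b x) \<Longrightarrow> b \<le> l \<and> l < 2 * b"
proof (induction b x rule: plens.induct)
  case (1 b x)
  show ?case
  proof (cases "x = 0 \<or> x < 2 * b")
    case True then show ?thesis using 1 by (subst (asm) plens.simps) auto
  next
    case False
    then have "l \<in> set (b # plens b (x - b))" using 1 by (subst (asm) plens.simps) auto
    then show ?thesis using 1 False by auto
  qed
qed

lemma length_plens: "b > 0 \<Longrightarrow> length (plens b x) \<le> x div b + 1"
proof (induction b x rule: plens.induct)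
  case (1 b x)
  show ?case
  proof (cases "x = 0 \<or> x < 2 * b")
    case True then show ?thesis using 1 by (subst plens.simps) auto
  next
    case False
    then have "length (plens b x) = Suc (length (plens b (x - b)))" using 1 by (subst plens.simps) auto
    moreover have "(x - b) div b + 1 = x div b"
    proof -
      have "x = (x - b) + b" using False by simp
      then have "x div b = (x - b) div b + 1" using 1(2) by (metis div_add_self2 neq0_conv)
      then show ?thesis by simp
    qed
    ultimately show ?thesis using 1 False by auto
  qed
qed

definition stp :: "nat list \<Rightarrow> nat \<Rightarrow> nat" where
  "stp ls k = sum_list (take k ls)"

lemma stp_Suc: "k < length ls \<Longrightarrow> stp ls (Suc k) = stp ls k + ls ! k"
  by (simp add: stp_def take_Suc_conv_app_nth)

lemma stp_mono: "k \<le> k' \<Longrightarrow> stp ls k \<le> stp ls k'"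
proof -
  assume "k \<le> k'"
  then have "take k' ls = take k ls @ take (k' - k) (drop k ls)"
    by (metis le_add_diff_inverse take_add)
  then show ?thesis by (simp add: stp_def)
qed

lemma block_exists: "p < sum_list ls \<Longrightarrow> \<exists>k<length ls. stp ls k \<le> p \<and> p < stp ls k + ls ! k"
proof (induction ls arbitrary: p)
  case Nil then show ?case by simp
next
  case (Cons l ls)
  show ?case
  proof (cases "p < l")
    case True then show ?thesis by (intro exI[of _ 0]) (auto simp: stp_def)
  next
    case False
    have "p - l < sum_list ls" using Cons.prems False by simp
    then obtain k where k: "k < length ls" "stp ls k \<le> p - l" "p - l < stp ls k + ls ! k"
      using Cons.IH by blast
    have "stp (l # ls) (Suc k) = l + stp ls k" by (simp add: stp_def)
    then show ?thesis using k False by (intro exI[of _ "Suc k"]) auto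
  qed
qed

lemma block_disj:
  assumes "k < k'" "k' < length ls"
  shows "stp ls k + ls ! k \<le> stp ls k'"
  using stp_Suc[of k ls] stp_mono[of "Suc k" k' ls] assms by simp

lemma st_zip: "length os = length ls \<Longrightarrow> st (zip ls os) k = stp ls k"
  by (simp add: st_def stp_def take_zip)

lemma credit_zip: "length os = length ls \<Longrightarrow>
   credit (zip ls os) = (\<Sum>k\<in>{k. k < length ls \<and> os ! k \<noteq> None}. ls ! k)"
proof -
  assume len: "length os = length ls"
  have "credit (zip ls os) = (\<Sum>k<length ls. (\<lambda>(l, ob). if ob = None then 0 else l) (zip ls os ! k))"
    unfolding credit_def using len by (simp add: sum_list_sum_nth atLeast0LessThan)
  also have "\<dots> = (\<Sum>k<length ls. if os ! k = None then 0 else ls ! k)"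
    using len by (intro sum.cong) auto
  also have "\<dots> = (\<Sum>k\<in>{k. k < length ls \<and> os ! k \<noteq> None}. ls ! k)"
    by (simp add: sum.If_cases Collect_conj_eq lessThan_def Int_commute) (rule sum.cong, auto)
  finally show ?thesis .
qed

lemma blocks_exist:
  fixes T :: "'a list"
  assumes sl: "sum_list ls = length T"
    and lsb: "\<forall>l\<in>set ls. b \<le> l \<and> l < 2 * b"
    and nb: "4 * b \<le> n" and b1: "1 \<le> b"
    and finP: "finite P"
    and Pw: "\<forall>i\<in>P. i + n \<le> length T \<and> (\<exists>i'<i. take n (drop i' T) = take n (drop i T))"
  shows "\<exists>os. length os = length ls \<and> set os \<subseteq> insert None (Some ` {..<length T}) \<and>
           valid (zip ls os) T \<and> card P \<le> credit (zip ls os)"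
proof -
  define a where "a = 2 * b - 2"
  define inb where "inb k i \<longleftrightarrow> i \<in> P \<and> stp ls k \<le> i + a \<and> i + a < stp ls k + ls ! k" for k i
  define cred where "cred k \<longleftrightarrow> (\<exists>i. inb k i)" for k
  define pick where "pick k = (SOME i. inb k i)" for k
  define src where "src i = (SOME i'. i' < i \<and> take n (drop i' T) = take n (drop i T))" for i
  define os where "os = map (\<lambda>k. if cred k then Some (src (pick k) + (stp ls k - pick k)) else None) [0..<length ls]"
  have los: "length os = length ls" by (simp add: os_def)
  have osk: "os ! k = (if cred k then Some (src (pick k) + (stp ls k - pick k)) else None)" if "k < length ls" for k
    using that by (simp add: os_def)
  have lk: "b \<le> ls ! k \<and> ls ! k < 2 * b" if "k < length ls" for k
    using lsb that by (simp add: nth_mem)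
  have stT: "stp ls k + ls ! k \<le> length T" if "k < length ls" for k
  proof -
    have "stp ls k + ls ! k = stp ls (Suc k)" using stp_Suc[OF that] by simp
    also have "\<dots> \<le> stp ls (length ls)" using that by (intro stp_mono) simp
    also have "\<dots> = length T" using sl by (simp add: stp_def)
    finally show ?thesis .
  qed
  have key: "q < stp ls k \<and> q < length T \<and> (\<forall>t < ls ! k. T ! (stp ls k + t) = T ! (q + t))"
    if k: "k < length ls" "cred k" and q: "q = src (pick k) + (stp ls k - pick k)" for k q
  proof -
    define i where "i = pick k"
    have inb: "inb k i" using k(2) unfolding cred_def i_def pick_def by (metis someI_ex)
    then have iP: "i \<in> P" and i1: "stp ls k \<le> i + a" and i2: "i + a < stp ls k + ls ! k"
      by (auto simp: inb_def)
    have iT: "i + n \<le> length T" using Pw iP by auto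
    have "\<exists>i'<i. take n (drop i' T) = take n (drop i T)" using Pw iP by auto
    then have src: "src i < i \<and> take n (drop (src i) T) = take n (drop i T)"
      unfolding src_def by (metis (mono_tags, lifting) someI_ex)
    define i' where "i' = src i"
    have ii: "i' < i" and weq: "take n (drop i' T) = take n (drop i T)" using src by (auto simp: i'_def)
    have lkk: "b \<le> ls ! k" "ls ! k < 2 * b" using lk[OF k(1)] by auto
    have sti: "i \<le> stp ls k" using i2 lkk b1 by (simp add: a_def)
    have qq: "q = i' + (stp ls k - i)" using q by (simp add: i_def i'_def)
    have st_lt: "stp ls k < length T" using stT[OF k(1)] lkk b1 by simp
    have c1: "q < stp ls k" using qq ii sti by simp
    have c2: "T ! (stp ls k + t) = T ! (q + t)" if t: "t < ls ! k" for t
    proof -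
      define o' where "o' = stp ls k - i + t"
      have on: "o' < n" using i1 t lkk nb b1 by (simp add: o'_def a_def)
      have e1: "T ! (stp ls k + t) = take n (drop i T) ! o'"
        using on iT sti by (simp add: o'_def)
      have qt: "q + t = i' + o'" using qq sti by (simp add: o'_def)
      have e2: "T ! (q + t) = take n (drop i' T) ! o'"
        using on iT ii by (simp add: qt)
      show ?thesis using e1 e2 weq by simp
    qed
    show ?thesis using c1 c2 st_lt by simp
  qed
  have valid: "valid (zip ls os) T"
    unfolding valid_def
  proof (intro allI impI)
    fix k q assume k: "k < length (zip ls os)" and "snd (zip ls os ! k) = Some q"
    then have kl: "k < length ls" and ok: "os ! k = Some q" using los by auto
    then have ck: "cred k" and qd: "q = src (pick k) + (stp ls k - pick k)"
      using osk[OF kl] by (auto split: if_splits)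
    have "st (zip ls os) k = stp ls k" using st_zip[OF los] .
    moreover have "fst (zip ls os ! k) = ls ! k" using kl los by simp
    ultimately show "q < st (zip ls os) k \<and>
         (\<forall>t<fst (zip ls os ! k). T ! (st (zip ls os) k + t) = T ! (q + t))"
      using key[OF kl ck qd] by simp
  qed
  have setos: "set os \<subseteq> insert None (Some ` {..<length T})"
  proof
    fix x assume "x \<in> set os"
    then obtain k where k: "k < length ls" "x = os ! k" using los by (metis in_set_conv_nth)
    then show "x \<in> insert None (Some ` {..<length T})"
      using osk[OF k(1)] key[OF k(1)] by (auto split: if_splits)
  qed
  define K where "K = {k. k < length ls \<and> os ! k \<noteq> None}"
  have Kc: "k \<in> K \<longleftrightarrow> k < length ls \<and> cred k" for k
    using osk by (auto simp: K_def split: if_splits)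
  define CP where "CP = (\<Union>k\<in>K. {stp ls k..<stp ls k + ls ! k})"
  have finK: "finite K" by (simp add: K_def)
  have cardCP: "card CP = (\<Sum>k\<in>K. ls ! k)"
    unfolding CP_def
  proof (subst card_UN_disjoint)
    show "\<forall>i\<in>K. \<forall>j\<in>K. i \<noteq> j \<longrightarrow> {stp ls i..<stp ls i + ls ! i} \<inter> {stp ls j..<stp ls j + ls ! j} = {}"
    proof (intro ballI impI)
      fix i j assume ij: "i \<in> K" "j \<in> K" "i \<noteq> j"
      show "{stp ls i..<stp ls i + ls ! i} \<inter> {stp ls j..<stp ls j + ls ! j} = {}"
      proof (cases "i < j")
        case True then show ?thesis using block_disj[of i j ls] ij by (auto simp: K_def)
      next
        case False then have "j < i" using ij by simp
        then show ?thesis using block_disj[of j i ls] ij by (auto simp: K_def)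
      qed
    qed
  qed (use finK in auto)
  have credit_eq: "credit (zip ls os) = card CP"
    using credit_zip[OF los] cardCP by (simp add: K_def)
  have img: "(\<lambda>i. i + a) ` P \<subseteq> CP"
  proof
    fix x assume "x \<in> (\<lambda>i. i + a) ` P"
    then obtain i where iP: "i \<in> P" and x: "x = i + a" by auto
    have "i + a < sum_list ls" using Pw iP nb b1 sl by (auto simp: a_def)
    then obtain k where k: "k < length ls" "stp ls k \<le> i + a" "i + a < stp ls k + ls ! k"
      using block_exists by blast
    then have "cred k" using iP by (auto simp: cred_def inb_def)
    then show "x \<in> CP" using k x Kc by (auto simp: CP_def)
  qed
  have "card P = card ((\<lambda>i. i + a) ` P)" by (simp add: card_image inj_on_def)
  also have "\<dots> \<le> card CP" using img by (intro card_mono) (auto simp: CP_def finK)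
  finally have "card P \<le> credit (zip ls os)" using credit_eq by simp
  then show ?thesis using los setos valid by blast
qed



lemma count_P:
  fixes w :: "nat \<Rightarrow> 'b"
  assumes fin: "finite A" and LA: "Lin \<subseteq> A"
  shows "card A \<le> card {i\<in>Lin. \<exists>i'\<in>Lin. i' < i \<and> w i' = w i} + card (w ` A)
           + card ((A - Lin) \<inter> {i\<in>A. \<exists>i'\<in>A. i' \<noteq> i \<and> w i' = w i})"
proof -
  define P where "P = {i\<in>Lin. \<exists>i'\<in>Lin. i' < i \<and> w i' = w i}"
  define M where "M = {i\<in>A. \<exists>i'\<in>A. i' \<noteq> i \<and> w i' = w i}"
  define F where "F = Lin - P"
  define S where "S = (A - Lin) - M"
  have injF: "inj_on w (F \<union> S)"
  proof (rule inj_onI)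
    fix x y assume x: "x \<in> F \<union> S" and y: "y \<in> F \<union> S" and e: "w x = w y"
    show "x = y"
    proof (rule ccontr)
      assume ne: "x \<noteq> y"
      have xA: "x \<in> A" and yA: "y \<in> A" using x y LA by (auto simp: F_def S_def)
      show False
      proof (cases "x \<in> S")
        case True then show False using yA e ne by (auto simp: S_def M_def)
      next
        case False
        then have xF: "x \<in> F" using x by auto
        show False
        proof (cases "y \<in> S")
          case True then show False using xA e ne by (auto simp: S_def M_def)
        next
          case False
          then have yF: "y \<in> F" using y by auto
          show False
          proof (cases "x < y")
            case True then show False using xF yF e by (auto simp: F_def P_def)
          next
            case False then have "y < x" using ne by simp
            then show False using xF yF e by (auto simp: F_def P_def)
          qed
        qed
      qed
    qed
  qed
  have finL: "finite Lin" using fin LA finite_subset by blast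
  have "card (F \<union> S) = card (w ` (F \<union> S))" using injF by (simp add: card_image)
  also have "\<dots> \<le> card (w ` A)"
    using LA by (intro card_mono) (auto simp: fin F_def S_def)
  finally have FS: "card (F \<union> S) \<le> card (w ` A)" .
  have disj: "F \<inter> S = {}" by (auto simp: F_def S_def)
  have cFS: "card (F \<union> S) = card F + card S"
    using disj finL fin by (intro card_Un_disjoint) (auto simp: F_def S_def)
  have PF: "card Lin = card P + card F"
  proof -
    have "P \<subseteq> Lin" by (auto simp: P_def)
    then have "card F = card Lin - card P" using finL by (simp add: F_def card_Diff_subset finite_subset)
    moreover have "card P \<le> card Lin" using \<open>P \<subseteq> Lin\<close> finL by (rule card_mono[rotated])
    ultimately show ?thesis by simp
  qed
  have AL: "card A = card Lin + card (A - Lin)"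
  proof -
    have "card (A - Lin) = card A - card Lin" using finL LA by (simp add: card_Diff_subset)
    moreover have "card Lin \<le> card A" using LA fin by (rule card_mono[rotated])
    ultimately show ?thesis by simp
  qed
  have SM: "card (A - Lin) = card ((A - Lin) \<inter> M) + card S"
  proof -
    have "A - Lin = ((A - Lin) \<inter> M) \<union> S" by (auto simp: S_def)
    moreover have "((A - Lin) \<inter> M) \<inter> S = {}" by (auto simp: S_def)
    moreover have "finite ((A - Lin) \<inter> M)" "finite S" using fin by (auto simp: S_def)
    ultimately show ?thesis using card_Un_disjoint[of "(A - Lin) \<inter> M" S] by simp
  qed
  show ?thesis using FS cFS PF AL SM by (simp add: P_def M_def)
qed

lemma card_multi:
  fixes w :: "nat \<Rightarrow> 'b"
  assumes fin: "finite A"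
  shows "card {i\<in>A. \<exists>i'\<in>A. i' \<noteq> i \<and> w i' = w i} \<le> 2 * (card A - card (w ` A))"
proof -
  define M where "M = {i\<in>A. \<exists>i'\<in>A. i' \<noteq> i \<and> w i' = w i}"
  define Fb where "Fb y = {i\<in>A. w i = y}" for y
  have finF: "finite (Fb y)" for y using fin by (simp add: Fb_def)
  have cardA: "card A = (\<Sum>y\<in>w ` A. card (Fb y))"
  proof -
    have "A = (\<Union>y\<in>w ` A. Fb y)" by (auto simp: Fb_def)
    then have "card A = card (\<Union>y\<in>w ` A. Fb y)" by simp
    also have "\<dots> = (\<Sum>y\<in>w ` A. card (Fb y))"
      using fin finF by (intro card_UN_disjoint) (auto simp: Fb_def)
    finally show ?thesis .
  qed
  have cardM: "card M = (\<Sum>y\<in>w ` M. card (Fb y))"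
  proof -
    have "M = (\<Union>y\<in>w ` M. Fb y)"
    proof
      show "M \<subseteq> (\<Union>y\<in>w ` M. Fb y)" by (auto simp: Fb_def M_def)
      show "(\<Union>y\<in>w ` M. Fb y) \<subseteq> M"
      proof
        fix x assume "x \<in> (\<Union>y\<in>w ` M. Fb y)"
        then obtain z where z: "z \<in> M" "x \<in> A" "w x = w z" by (auto simp: Fb_def)
        then obtain z' where z': "z' \<in> A" "z' \<noteq> z" "w z' = w z" "z \<in> A" by (auto simp: M_def)
        show "x \<in> M"
        proof (cases "x = z")
          case True then show ?thesis using z by simp
        next
          case False then show ?thesis using z by (auto simp: M_def)
        qed
      qed
    qed
    then have "card M = card (\<Union>y\<in>w ` M. Fb y)" by simp
    also have "\<dots> = (\<Sum>y\<in>w ` M. card (Fb y))"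
      using fin finF by (intro card_UN_disjoint) (auto simp: Fb_def M_def)
    finally show ?thesis .
  qed
  have F1: "card (Fb y) \<ge> 1" if "y \<in> w ` A" for y
  proof -
    from that obtain x where "x \<in> A" "y = w x" by blast
    then have "x \<in> Fb y" by (simp add: Fb_def)
    then have "card (Fb y) > 0" using finF[of y] card_gt_0_iff by blast
    then show ?thesis by simp
  qed
  have F2: "card (Fb y) \<ge> 2" if "y \<in> w ` M" for y
  proof -
    from that obtain i where i: "i \<in> M" "y = w i" by blast
    then obtain i' where "i' \<in> A" "i' \<noteq> i" "w i' = w i" "i \<in> A" by (auto simp: M_def)
    then have "{i, i'} \<subseteq> Fb y" using i by (auto simp: Fb_def)
    then have "card {i, i'} \<le> card (Fb y)" using finF by (intro card_mono) auto
    then show ?thesis using \<open>i' \<noteq> i\<close> by simp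
  qed
  have "card A - card (w ` A) = (\<Sum>y\<in>w ` A. card (Fb y) - 1)"
  proof -
    have "(\<Sum>y\<in>w ` A. card (Fb y) - 1) + (\<Sum>y\<in>w ` A. 1) = (\<Sum>y\<in>w ` A. card (Fb y))"
    proof (subst sum.distrib[symmetric], rule sum.cong[OF refl])
      fix y assume "y \<in> w ` A"
      then show "card (Fb y) - 1 + 1 = card (Fb y)" using F1[of y] by simp
    qed
    then show ?thesis using cardA by simp
  qed
  moreover have "(\<Sum>y\<in>w ` M. card (Fb y) - 1) \<le> (\<Sum>y\<in>w ` A. card (Fb y) - 1)"
    by (intro sum_mono2) (auto simp: fin M_def)
  moreover have "card M \<le> 2 * (\<Sum>y\<in>w ` M. card (Fb y) - 1)"
    unfolding cardM sum_distrib_left by (intro sum_mono) (use F2 in fastforce)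
  ultimately show ?thesis by (simp add: M_def)
qed

lemma modcancel: "((i::nat) + x) mod L = (i + y) mod L \<Longrightarrow> x mod L = y mod L"
  by (simp add: nat_mod_eq_iff)

lemma avg_cut:
  fixes L n :: nat
  assumes Mu: "Mu \<subseteq> {..<L}" and Al: "Al \<subseteq> {..<L}" "Al \<noteq> {}"
  shows "\<exists>m\<in>Al. card Al * card {i. i < L \<and> L < i + n \<and> (i + m) mod L \<in> Mu} \<le> (n - 1) * card Mu"
proof -
  define S where "S = {i. i < L \<and> L < i + n}"
  define f where "f m = card {i. i < L \<and> L < i + n \<and> (i + m) mod L \<in> Mu}" for m
  have finS: "finite S" by (simp add: S_def)
  have cS: "card S \<le> n - 1"
  proof -
    have "S \<subseteq> {L + 1 - n..<L}" by (auto simp: S_def)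
    then have "card S \<le> card {L + 1 - n..<L}" by (intro card_mono) auto
    then show ?thesis by simp
  qed
  have fm: "f m = (\<Sum>i\<in>S. if (i + m) mod L \<in> Mu then 1 else 0)" for m
  proof -
    have "f m = card {i\<in>S. (i + m) mod L \<in> Mu}" by (simp add: f_def S_def conj_assoc)
    also have "\<dots> = (\<Sum>i\<in>S. if (i + m) mod L \<in> Mu then 1 else 0)"
      using sum.inter_filter[OF finS, of "\<lambda>_. 1::nat" "\<lambda>i. (i + m) mod L \<in> Mu"] by simp
    finally show ?thesis .
  qed
  have inner: "(\<Sum>m<L. if (i + m) mod L \<in> Mu then 1 else 0) \<le> card Mu" for i
  proof -
    have "(\<Sum>m<L. if (i + m) mod L \<in> Mu then 1 else (0::nat)) = card {m\<in>{..<L}. (i + m) mod L \<in> Mu}"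
      by (simp add: sum.If_cases Int_def)
    also have "\<dots> \<le> card Mu"
    proof (rule card_inj_on_le[where f = "\<lambda>m. (i + m) mod L"])
      show "inj_on (\<lambda>m. (i + m) mod L) {m \<in> {..<L}. (i + m) mod L \<in> Mu}"
      proof (rule inj_onI)
        fix x y assume x: "x \<in> {m \<in> {..<L}. (i + m) mod L \<in> Mu}" and y: "y \<in> {m \<in> {..<L}. (i + m) mod L \<in> Mu}"
          and e: "(i + x) mod L = (i + y) mod L"
        have "x mod L = y mod L" using modcancel[OF e] .
        moreover have "x mod L = x" "y mod L = y" using x y by simp_all
        ultimately show "x = y" by simp
      qed
      show "finite Mu" using finite_subset[OF Mu] by simp
    qed auto
    finally show ?thesis .
  qed
  have "(\<Sum>m<L. f m) = (\<Sum>i\<in>S. \<Sum>m<L. if (i + m) mod L \<in> Mu then 1 else 0)"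
    by (simp add: fm sum.swap[of _ S])
  also have "\<dots> \<le> (\<Sum>i\<in>S. card Mu)" by (intro sum_mono inner)
  also have "\<dots> = card S * card Mu" by simp
  also have "\<dots> \<le> (n - 1) * card Mu" using cS by simp
  finally have tot: "(\<Sum>m<L. f m) \<le> (n - 1) * card Mu" .
  have finAl: "finite Al" using Al finite_subset by blast
  define v where "v = Min (f ` Al)"
  have "v \<in> f ` Al" unfolding v_def using finAl Al(2) by (intro Min_in) auto
  then obtain m where m: "m \<in> Al" "f m = v" by auto
  have "card Al * v \<le> sum f Al"
    using sum_bounded_below[of Al v f] finAl by (simp add: v_def)
  also have "\<dots> \<le> (\<Sum>m<L. f m)" using Al by (intro sum_mono2) auto
  finally have "card Al * f m \<le> (n - 1) * card Mu" using m tot by simp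
  then show ?thesis using m(1) unfolding f_def by blast
qed



definition cw :: "nat \<Rightarrow> 'a list \<Rightarrow> nat \<Rightarrow> 'a list" where
  "cw n c i = map (\<lambda>s. c ! ((i + s) mod length c)) [0..<n]"

lemma window_lin: "i + n \<le> length x \<Longrightarrow> take n (drop i x) = map (\<lambda>s. x ! (i + s)) [0..<n]"
  by (intro nth_equalityI) auto

lemma cw_mod: "cw n c (i mod length c) = cw n c i"
  unfolding cw_def by (intro map_cong refl) (simp add: mod_add_left_eq)

lemma cw_rot: "length c > 0 \<Longrightarrow> cw n (rotate m c) i = cw n c (i + m)"
  unfolding cw_def
proof (intro map_cong refl)
  fix s assume "length c > 0"
  then show "rotate m c ! ((i + s) mod length (rotate m c)) = c ! ((i + m + s) mod length c)"
    by (simp add: nth_rotate mod_add_right_eq add.commute add.left_commute)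
qed

lemma cw_lin: "i + n \<le> length c \<Longrightarrow> cw n c i = take n (drop i c)"
  unfolding cw_def by (subst window_lin) auto

lemma sub_cw:
  assumes lc: "length c = L" and nL: "n \<le> L" and L0: "0 < L"
  shows "subwords n (c @ take n c) = cw n c ` {..<L}"
proof -
  have win: "take n (drop i (c @ take n c)) = cw n c i" if "i \<le> L" for i
  proof -
    have "take n (drop i (c @ take n c)) = map (\<lambda>s. (c @ take n c) ! (i + s)) [0..<n]"
      using that lc nL by (intro window_lin) simp
    also have "\<dots> = cw n c i" unfolding cw_def
    proof (intro map_cong refl)
      fix s assume "s \<in> set [0..<n]"
      then have s: "s < n" by simp
      show "(c @ take n c) ! (i + s) = c ! ((i + s) mod length c)"
      proof (cases "i + s < L")
        case True then show ?thesis using lc by (simp add: nth_append)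
      next
        case False
        have "(i + s) mod L = (i + s - L) mod L" using False by (intro le_mod_geq) simp
        also have "\<dots> = i + s - L" using that s nL by (intro mod_less) simp
        finally have "(i + s) mod L = i + s - L" .
        then show ?thesis using False lc s that nL by (simp add: nth_append)
      qed
    qed
    finally show ?thesis .
  qed
  show ?thesis
  proof
    show "subwords n (c @ take n c) \<subseteq> cw n c ` {..<L}"
    proof
      fix x assume "x \<in> subwords n (c @ take n c)"
      then obtain i where i: "i + n \<le> length (c @ take n c)" "x = take n (drop i (c @ take n c))"
        by (auto simp: subwords_def)
      then have iL: "i \<le> L" using lc nL by simp
      have x: "x = cw n c i" using i(2) win[OF iL] by (rule trans)
      show "x \<in> cw n c ` {..<L}"
      proof (cases "i < L")
        case True then show ?thesis using x by auto
      next
        case False then have "i = L" using iL by simp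
        then have "x = cw n c 0" using x cw_mod[of n c i] lc by simp
        then show ?thesis using L0 by auto
      qed
    qed
    show "cw n c ` {..<L} \<subseteq> subwords n (c @ take n c)"
    proof
      fix x assume "x \<in> cw n c ` {..<L}"
      then obtain i where i: "i < L" "x = cw n c i" by auto
      then have "x = take n (drop i (c @ take n c))" using win[of i] by simp
      moreover have "i + n \<le> length (c @ take n c)" using i lc nL by simp
      ultimately show "x \<in> subwords n (c @ take n c)" unfolding subwords_def by blast
    qed
  qed
qed

lemma pair_comb:
  fixes cu cv :: "'a list"
  assumes lu: "length cu = L" and lv: "length cv = L" and b1: "1 \<le> b" and nb: "4 * b \<le> n"
    and nL: "n \<le> L"
  shows "\<exists>mu\<in>{m. m < L \<and> (m = 0 \<or> (b \<le> m \<and> m + b \<le> L))}. \<exists>mv\<in>{m. m < L \<and> (m = 0 \<or> (b \<le> m \<and> m + b \<le> L))}.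
    \<exists>os. length os = length (plens b (L - mu) @ plens b mu @ plens b (L - mv) @ plens b mv) \<and>
      set os \<subseteq> insert None (Some ` {..<2 * L}) \<and>
      valid (zip (plens b (L - mu) @ plens b mu @ plens b (L - mv) @ plens b mv) os) (rotate mu cu @ rotate mv cv) \<and>
      card {m. m < L \<and> (m = 0 \<or> (b \<le> m \<and> m + b \<le> L))} * (2 * L - card (cw n cu ` {..<L} \<union> cw n cv ` {..<L}))
      \<le> card {m. m < L \<and> (m = 0 \<or> (b \<le> m \<and> m + b \<le> L))} *
          credit (zip (plens b (L - mu) @ plens b mu @ plens b (L - mv) @ plens b mv) os)
        + 2 * (n - 1) * (2 * L - card (cw n cu ` {..<L} \<union> cw n cv ` {..<L}))"
proof -
  define Al where "Al = {m. m < L \<and> (m = 0 \<or> (b \<le> m \<and> m + b \<le> L))}"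
  define D where "D = cw n cu ` {..<L} \<union> cw n cv ` {..<L}"
  define A where "A = {..<2 * L}"
  have L0: "0 < L" using b1 nb nL by simp
  define wc where "wc p = (if p < L then cw n cu p else cw n cv (p - L))" for p
  have wcA: "wc ` A = D"
  proof
    show "wc ` A \<subseteq> D" by (auto simp: wc_def A_def D_def)
    show "D \<subseteq> wc ` A"
    proof
      fix x assume "x \<in> D"
      then consider (u) p where "p < L" "x = cw n cu p" | (v) p where "p < L" "x = cw n cv p"
        by (auto simp: D_def)
      then show "x \<in> wc ` A"
      proof cases
        case u then show ?thesis by (intro image_eqI[of _ _ p]) (auto simp: wc_def A_def)
      next
        case v then show ?thesis by (intro image_eqI[of _ _ "L + p"]) (auto simp: wc_def A_def)
      qed
    qed
  qed
  define Mc where "Mc = {p\<in>A. \<exists>p'\<in>A. p' \<noteq> p \<and> wc p' = wc p}"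
  have cMc: "card Mc \<le> 2 * (2 * L - card D)"
    using card_multi[of A wc] wcA by (simp add: Mc_def A_def)
  define Mu where "Mu = {p. p < L \<and> p \<in> Mc}"
  define Mv where "Mv = {p. p < L \<and> L + p \<in> Mc}"
  have cMuv: "card Mu + card Mv \<le> card Mc"
  proof -
    have d: "Mu \<inter> (\<lambda>p. L + p) ` Mv = {}" by (auto simp: Mu_def Mv_def)
    have "card Mu + card Mv = card Mu + card ((\<lambda>p. L + p) ` Mv)" by (simp add: card_image)
    also have "\<dots> = card (Mu \<union> (\<lambda>p. L + p) ` Mv)"
      using d by (intro card_Un_disjoint[symmetric]) (auto simp: Mu_def Mv_def)
    also have "\<dots> \<le> card Mc" by (intro card_mono) (auto simp: Mc_def A_def Mu_def Mv_def)
    finally show ?thesis .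
  qed
  have AlL: "Al \<subseteq> {..<L}" "Al \<noteq> {}" using L0 by (auto simp: Al_def)
  obtain mu where mu: "mu \<in> Al"
    "card Al * card {i. i < L \<and> L < i + n \<and> (i + mu) mod L \<in> Mu} \<le> (n - 1) * card Mu"
    using avg_cut[of Mu L Al n] AlL by (auto simp: Mu_def)
  obtain mv where mv: "mv \<in> Al"
    "card Al * card {i. i < L \<and> L < i + n \<and> (i + mv) mod L \<in> Mv} \<le> (n - 1) * card Mv"
    using avg_cut[of Mv L Al n] AlL by (auto simp: Mv_def)
  define Su where "Su = {i. i < L \<and> L < i + n \<and> (i + mu) mod L \<in> Mu}"
  define Sv where "Sv = {i. i < L \<and> L < i + n \<and> (i + mv) mod L \<in> Mv}"
  define tu where "tu = rotate mu cu"
  define tv where "tv = rotate mv cv"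
  define T where "T = tu @ tv"
  have ltu: "length tu = L" and ltv: "length tv = L" using lu lv by (auto simp: tu_def tv_def)
  have lT: "length T = 2 * L" using ltu ltv by (simp add: T_def)
  define wT where "wT i = (if i < L then cw n tu i else cw n tv (i - L))" for i
  define Lin where "Lin = {i. i + n \<le> L} \<union> {i. L \<le> i \<and> i + n \<le> 2 * L}"
  define P where "P = {i\<in>Lin. \<exists>i'\<in>Lin. i' < i \<and> wT i' = wT i}"
  define MT where "MT = {i\<in>A. \<exists>i'\<in>A. i' \<noteq> i \<and> wT i' = wT i}"
  have LinA: "Lin \<subseteq> A" using L0 b1 nb by (auto simp: Lin_def A_def)
  have cnt: "card A \<le> card P + card (wT ` A) + card ((A - Lin) \<inter> MT)"
    using count_P[OF _ LinA, of wT] by (simp add: A_def P_def MT_def)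
  define phi where "phi x = (if x < L then (x + mu) mod L else L + (x - L + mv) mod L)" for x
  have wTphi: "wT x = wc (phi x)" if "x \<in> A" for x
  proof (cases "x < L")
    case True
    then have "wT x = cw n cu (x + mu)" using cw_rot[of cu n mu x] lu L0 by (simp add: wT_def tu_def)
    also have "\<dots> = cw n cu ((x + mu) mod L)" using cw_mod[of n cu "x + mu"] lu by simp
    finally show ?thesis using L0 True by (simp add: wc_def phi_def)
  next
    case False
    then have "wT x = cw n cv (x - L + mv)" using cw_rot[of cv n mv "x - L"] lv L0 by (simp add: wT_def tv_def)
    also have "\<dots> = cw n cv ((x - L + mv) mod L)" using cw_mod[of n cv "x - L + mv"] lv by simp
    finally show ?thesis using L0 False by (simp add: wc_def phi_def)
  qed
  have phiA: "phi x \<in> A" if "x \<in> A" for x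
  proof -
    have "(x + mu) mod L < L" "(x - L + mv) mod L < L" using L0 by simp_all
    then have "(x + mu) mod L < 2 * L" "L + (x - L + mv) mod L < 2 * L" by linarith+
    then show ?thesis unfolding phi_def A_def by (cases "x < L") auto
  qed
  have phi_inj: "inj_on phi A"
  proof (rule inj_onI)
    fix x y assume x: "x \<in> A" and y: "y \<in> A" and e: "phi x = phi y"
    show "x = y"
    proof (cases "x < L")
      case True
      show ?thesis
      proof (cases "y < L")
        case True
        then have "(x + mu) mod L = (y + mu) mod L" using e \<open>x < L\<close> by (simp add: phi_def)
        then have "x mod L = y mod L" using modcancel[of mu x L y] by (simp add: add.commute)
        then show ?thesis using \<open>x < L\<close> True by simp
      next
        case False
        then show ?thesis using e \<open>x < L\<close> mod_less_divisor[OF L0, of "x + mu"] by (simp add: phi_def)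
      qed
    next
      case False
      show ?thesis
      proof (cases "y < L")
        case True
        then show ?thesis using e False mod_less_divisor[OF L0, of "y + mu"] by (simp add: phi_def)
      next
        case False2: False
        then have "(x - L + mv) mod L = (y - L + mv) mod L" using e False by (simp add: phi_def)
        then have "(x - L) mod L = (y - L) mod L" using modcancel[of mv "x - L" L "y - L"] by (simp add: add.commute)
        moreover have "x - L < L" "y - L < L" using x y by (auto simp: A_def)
        ultimately show ?thesis using False False2 by simp
      qed
    qed
  qed
  have imgD: "wT ` A \<subseteq> D" using wTphi phiA wcA by blast
  have loss: "(A - Lin) \<inter> MT \<subseteq> Su \<union> (\<lambda>i. L + i) ` Sv"
  proof
    fix x assume x: "x \<in> (A - Lin) \<inter> MT"
    then obtain x' where x': "x' \<in> A" "x' \<noteq> x" "wT x' = wT x" and xA: "x \<in> A" and xL: "x \<notin> Lin"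
      by (auto simp: MT_def)
    have "phi x' \<noteq> phi x" using phi_inj x' xA by (meson inj_on_contraD)
    moreover have "wc (phi x') = wc (phi x)" using wTphi x' xA by simp
    ultimately have pM: "phi x \<in> Mc" using phiA x' xA unfolding Mc_def by blast
    show "x \<in> Su \<union> (\<lambda>i. L + i) ` Sv"
    proof (cases "x < L")
      case True
      then have "L < x + n" using xL by (auto simp: Lin_def)
      moreover have "(x + mu) mod L \<in> Mu" using pM True L0 by (simp add: phi_def Mu_def)
      ultimately show ?thesis using True by (simp add: Su_def)
    next
      case False
      then have "L < x - L + n" "x - L < L" using xL xA by (auto simp: Lin_def A_def)
      moreover have "(x - L + mv) mod L \<in> Mv" using pM False L0 by (simp add: phi_def Mv_def)
      ultimately have "x - L \<in> Sv" by (simp add: Sv_def)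
      then show ?thesis using False by (intro UnI2 image_eqI[of _ _ "x - L"]) auto
    qed
  qed
  have closs: "card ((A - Lin) \<inter> MT) \<le> card Su + card Sv"
  proof -
    have "card ((A - Lin) \<inter> MT) \<le> card (Su \<union> (\<lambda>i. L + i) ` Sv)"
      using loss by (intro card_mono) (auto simp: Su_def Sv_def)
    also have "\<dots> \<le> card Su + card ((\<lambda>i. L + i) ` Sv)" by (rule card_Un_le)
    also have "\<dots> \<le> card Su + card Sv" using card_image_le[of Sv "\<lambda>i. L + i"] by (simp add: Sv_def)
    finally show ?thesis .
  qed
  have cwD: "card (wT ` A) \<le> card D" using imgD by (intro card_mono) (auto simp: D_def)
  have winT: "take n (drop i T) = wT i" if "i \<in> Lin" for i
  proof (cases "i < L")
    case True
    then have "i + n \<le> L" using that by (auto simp: Lin_def)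
    then have "take n (drop i T) = take n (drop i tu)" using ltu by (simp add: T_def)
    also have "\<dots> = cw n tu i" using \<open>i + n \<le> L\<close> ltu by (simp add: cw_lin)
    finally show ?thesis using True by (simp add: wT_def)
  next
    case False
    then have "i - L + n \<le> L" using that by (auto simp: Lin_def)
    then have "take n (drop i T) = take n (drop (i - L) tv)" using ltu False by (simp add: T_def)
    also have "\<dots> = cw n tv (i - L)" using \<open>i - L + n \<le> L\<close> ltv by (simp add: cw_lin)
    finally show ?thesis using False by (simp add: wT_def)
  qed
  define ls where "ls = plens b (L - mu) @ plens b mu @ plens b (L - mv) @ plens b mv"
  have sls: "sum_list ls = length T" using mu(1) mv(1) lT by (simp add: ls_def sum_plens Al_def)
  have okx: "x = 0 \<or> b \<le> x" if "x \<in> {L - mu, mu, L - mv, mv}" for x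
    using that mu(1) mv(1) nb nL by (auto simp: Al_def)
  have sp: "b \<le> l \<and> l < 2 * b" if "x \<in> {L - mu, mu, L - mv, mv}" "l \<in> set (plens b x)" for x l
    by (rule set_plens) (use b1 okx that in auto)
  have lsb: "\<forall>l\<in>set ls. b \<le> l \<and> l < 2 * b"
    using sp[of "L - mu"] sp[of mu] sp[of "L - mv"] sp[of mv] by (auto simp: ls_def)
  have Pw: "\<forall>i\<in>P. i + n \<le> length T \<and> (\<exists>i'<i. take n (drop i' T) = take n (drop i T))"
  proof
    fix i assume i: "i \<in> P"
    then obtain i' where "i' \<in> Lin" "i' < i" "wT i' = wT i" "i \<in> Lin" by (auto simp: P_def)
    then show "i + n \<le> length T \<and> (\<exists>i'<i. take n (drop i' T) = take n (drop i T))"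
      using winT lT by (auto simp: Lin_def)
  qed
  have finP: "finite P" using LinA by (auto simp: P_def A_def intro: finite_subset)
  obtain os where os: "length os = length ls" "set os \<subseteq> insert None (Some ` {..<length T})"
    "valid (zip ls os) T" "card P \<le> credit (zip ls os)"
    using blocks_exist[OF sls lsb nb b1 finP Pw] by blast
  have main: "2 * L - card D \<le> card P + card Su + card Sv"
    using cnt cwD closs by (simp add: A_def)
  have "card Al * (2 * L - card D) \<le> card Al * (card P + card Su + card Sv)"
    using main by simp
  also have "\<dots> = card Al * card P + card Al * card Su + card Al * card Sv"
    by (simp add: algebra_simps)
  also have "\<dots> \<le> card Al * credit (zip ls os) + (n - 1) * card Mu + (n - 1) * card Mv"
    using mu(2) mv(2) os(4) by (intro add_mono) (auto simp: Su_def Sv_def)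
  also have "\<dots> \<le> card Al * credit (zip ls os) + 2 * (n - 1) * (2 * L - card D)"
  proof -
    have "(n - 1) * card Mu + (n - 1) * card Mv = (n - 1) * (card Mu + card Mv)" by (simp add: algebra_simps)
    also have "\<dots> \<le> (n - 1) * (2 * (2 * L - card D))" using cMuv cMc by simp
    finally show ?thesis by simp
  qed
  finally have fin: "card Al * (2 * L - card D) \<le> card Al * credit (zip ls os) + 2 * (n - 1) * (2 * L - card D)" .
  have X: "length os = length ls \<and> set os \<subseteq> insert None (Some ` {..<2 * L}) \<and>
    valid (zip ls os) (rotate mu cu @ rotate mv cv) \<and>
    card Al * (2 * L - card D) \<le> card Al * credit (zip ls os) + 2 * (n - 1) * (2 * L - card D)"
    using os fin lT by (simp add: T_def tu_def tv_def)
  show ?thesis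
    using mu(1) mv(1) X unfolding ls_def Al_def D_def by blast
qed



lemma length_word_at[simp]: "length (word_at x i m) = m"
  by (simp add: word_at_def)

lemma cyl_in_sets: "shift_invariant_prob X \<mu> \<Longrightarrow> cyl X w \<in> sets \<mu>"
proof -
  assume sp: "shift_invariant_prob X \<mu>"
  have "cyl X w = cyl_at X 0 w" by (simp add: cyl_def cyl_at_def)
  moreover have "cyl_at X 0 w \<in> cyl_sets X" by (auto simp: cyl_sets_def)
  ultimately have "cyl X w \<in> sigma_sets X (cyl_sets X)" by (auto intro: sigma_sets.Basic)
  then show ?thesis using sp by (simp add: shift_invariant_prob_def)
qed

lemma cp_nonneg: "cp \<mu> X w \<ge> 0"
  by (simp add: cp_def)

lemma cp_zero: "w \<notin> lang_all X \<Longrightarrow> cp \<mu> X w = 0"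
proof -
  assume w: "w \<notin> lang_all X"
  have "cyl X w = {}"
  proof (rule ccontr)
    assume "cyl X w \<noteq> {}"
    then obtain x where "x \<in> X" "word_at x 0 (length w) = w" by (auto simp: cyl_def)
    then have "w \<in> lang X (length w)" by (auto simp: lang_def)
    then show False using w by (auto simp: lang_all_def)
  qed
  then show ?thesis by (simp add: cp_def)
qed

lemma cp_append:
  assumes "\<forall>u v. u @ v \<in> lang_all X \<longrightarrow> cp \<mu> X (u @ v) \<le> K * cp \<mu> X u * cp \<mu> X v \<and> cp \<mu> X (u @ v) / cp \<mu> X u \<le> K * cp \<mu> X v"
    and "K > 0"
  shows "cp \<mu> X (x @ y) \<le> K * cp \<mu> X x * cp \<mu> X y"
proof (cases "x @ y \<in> lang_all X")
  case True then show ?thesis using assms by blast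
next
  case False then show ?thesis using assms(2) by (simp add: cp_zero cp_nonneg)
qed

lemma cp_sum_le1:
  assumes sp: "shift_invariant_prob X \<mu>"
  shows "(\<Sum>w\<in>{w::'a::finite list. length w = m}. cp \<mu> X w) \<le> 1"
proof -
  have ps: "prob_space \<mu>" and spX: "space \<mu> = X" using sp by (auto simp: shift_invariant_prob_def)
  have fin: "finite {w::'a list. length w = m}"
    using finite_lists_length_eq[of "UNIV::'a set" m] by simp
  have disj: "disjoint_family_on (cyl X) {w::'a list. length w = m}"
    by (auto simp: disjoint_family_on_def cyl_def)
  interpret prob_space \<mu> by (rule ps)
  have "(\<Sum>w\<in>{w::'a list. length w = m}. cp \<mu> X w) = measure \<mu> (\<Union>w\<in>{w::'a list. length w = m}. cyl X w)"
    unfolding cp_def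
    using finite_measure_finite_Union[OF fin _ disj] cyl_in_sets[OF sp] by (metis image_subset_iff)
  also have "\<dots> \<le> 1" by (rule prob_le_1)
  finally show ?thesis .
qed



lemma rotate_inj: "rotate m x = rotate m y \<Longrightarrow> x = y"
proof (induction m)
  case 0 then show ?case by simp
next
  case (Suc m)
  then have "rotate1 (rotate m x) = rotate1 (rotate m y)" by simp
  then have "rotate m x = rotate m y" using inj_rotate1 by (meson injD)
  then show ?case using Suc.IH by simp
qed

lemma w_concat:
  fixes w :: "'a list \<Rightarrow> real"
  assumes w0: "\<And>x. w x \<ge> 0" and wnil: "w [] \<le> 1" and wapp: "\<And>x y. w (x @ y) \<le> K * w x * w y" and K0: "K \<ge> 0"
  shows "w (concat xs) \<le> K ^ length xs * prod_list (map w xs)"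
proof (induction xs)
  case Nil then show ?case using wnil by simp
next
  case (Cons x xs)
  have "w (concat (x # xs)) \<le> K * w x * w (concat xs)" using wapp by simp
  also have "\<dots> \<le> K * w x * (K ^ length xs * prod_list (map w xs))"
    using Cons K0 w0 by (intro mult_left_mono) auto
  also have "\<dots> = K ^ length (x # xs) * prod_list (map w (x # xs))" by simp
  finally show ?case .
qed

lemma word_bound:
  fixes w :: "'a list \<Rightarrow> real"
  assumes w0: "\<And>x. w x \<ge> 0" and wnil: "w [] \<le> 1" and wapp: "\<And>x y. w (x @ y) \<le> K * w x * w y" and K0: "K \<ge> 0"
    and lu: "length u = L + n" and tu: "take n u = drop L u" and nL: "n \<le> L" and mu: "mu < L"
    and E: "w (take n u) \<le> E"
    and s1: "sum_list ls1 = L - mu" and s2: "sum_list ls2 = mu"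
  shows "w u \<le> K ^ (2 + length ls1 + length ls2) * E * prod_list (map w (splitl (ls1 @ ls2) (rotate mu (take L u))))"
proof -
  define c where "c = take L u"
  have lc: "length c = L" using lu by (simp add: c_def)
  have u: "u = c @ take n u" using tu by (simp add: c_def)
  have "w u \<le> K * w c * w (take n u)" by (subst u) (rule wapp)
  also have "\<dots> \<le> K * w c * E" using E K0 w0 by (intro mult_left_mono) auto
  finally have A: "w u \<le> K * w c * E" .
  have "w c = w (take mu c @ drop mu c)" by simp
  also have "\<dots> \<le> K * w (take mu c) * w (drop mu c)" by (rule wapp)
  finally have B: "w c \<le> K * w (take mu c) * w (drop mu c)" .
  have C1: "w (drop mu c) \<le> K ^ length ls1 * prod_list (map w (splitl ls1 (drop mu c)))"
    using w_concat[OF w0 wnil wapp K0, of "splitl ls1 (drop mu c)"] concat_splitl[of "drop mu c" ls1] s1 lc by simp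
  have C2: "w (take mu c) \<le> K ^ length ls2 * prod_list (map w (splitl ls2 (take mu c)))"
    using w_concat[OF w0 wnil wapp K0, of "splitl ls2 (take mu c)"] concat_splitl[of "take mu c" ls2] s2 lc mu by simp
  have rot: "rotate mu c = drop mu c @ take mu c" using mu lc by (simp add: rotate_drop_take)
  have sp: "splitl (ls1 @ ls2) (rotate mu c) = splitl ls1 (drop mu c) @ splitl ls2 (take mu c)"
    using rot splitl_append[of "drop mu c" ls1 ls2 "take mu c"] s1 lc by simp
  define P1 where "P1 = prod_list (map w (splitl ls1 (drop mu c)))"
  define P2 where "P2 = prod_list (map w (splitl ls2 (take mu c)))"
  have P10: "P1 \<ge> 0" and P20: "P2 \<ge> 0" unfolding P1_def P2_def by (auto intro!: prod_list_nonneg simp: w0)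
  have "w u \<le> K * (K * w (take mu c) * w (drop mu c)) * E"
    using A B K0 w0 E by (meson dual_order.trans mult_left_mono mult_right_mono order_trans w0 zero_le_mult_iff)
  also have "\<dots> \<le> K * (K * (K ^ length ls2 * P2) * (K ^ length ls1 * P1)) * E"
  proof -
    have E0: "E \<ge> 0" using E w0 order_trans by blast
    have "w (take mu c) * w (drop mu c) \<le> (K ^ length ls2 * P2) * (K ^ length ls1 * P1)"
      using C1 C2 w0 P20 K0 by (intro mult_mono) (auto simp: P1_def P2_def)
    then have "(K * K * E) * (w (take mu c) * w (drop mu c)) \<le> (K * K * E) * ((K ^ length ls2 * P2) * (K ^ length ls1 * P1))"
      using K0 E0 by (intro mult_left_mono) auto
    then show ?thesis by (simp add: algebra_simps)
  qed
  also have "\<dots> = K ^ (2 + length ls1 + length ls2) * E * (P1 * P2)"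
    by (simp add: power_add algebra_simps power2_eq_square)
  also have "P1 * P2 = prod_list (map w (splitl (ls1 @ ls2) (rotate mu (take L u))))"
    by (simp add: sp P1_def P2_def c_def[symmetric])
  finally show ?thesis .
qed

lemma sum_cover:
  fixes f :: "'p \<Rightarrow> real"
  assumes finQ: "finite Q" and finS: "finite S" and f0: "\<And>p. f p \<ge> 0"
    and cov: "\<And>p. p \<in> Q \<Longrightarrow> \<exists>s\<in>S. good s p"
  shows "(\<Sum>p\<in>Q. f p) \<le> (\<Sum>s\<in>S. \<Sum>p\<in>{p\<in>Q. good s p}. f p)"
proof -
  have "(\<Sum>p\<in>Q. f p) \<le> (\<Sum>p\<in>Q. \<Sum>s\<in>S. if good s p then f p else 0)"
  proof (rule sum_mono)
    fix p assume p: "p \<in> Q"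
    then obtain s where s: "s \<in> S" "good s p" using cov by blast
    have "f p = (if good s p then f p else 0)" using s by simp
    also have "\<dots> \<le> (\<Sum>s\<in>S. if good s p then f p else 0)"
      using s finS f0 by (intro member_le_sum) auto
    finally show "f p \<le> (\<Sum>s\<in>S. if good s p then f p else 0)" .
  qed
  also have "\<dots> = (\<Sum>s\<in>S. \<Sum>p\<in>Q. if good s p then f p else 0)" by (rule sum.swap)
  also have "\<dots> = (\<Sum>s\<in>S. \<Sum>p\<in>{p\<in>Q. good s p}. f p)"
    using finQ by (simp add: sum.inter_filter)
  finally show ?thesis .
qed



lemma main_bound:
  fixes w :: "'a::finite list \<Rightarrow> real" and Q :: "('a list \<times> 'a list) set"
  assumes w0: "\<And>x. w x \<ge> 0" and w1: "\<And>m. (\<Sum>x\<in>{x. length x = m}. w x) \<le> 1"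
    and wapp: "\<And>x y. w (x @ y) \<le> K * w x * w y" and K1: "K \<ge> 1"
    and wg: "\<And>x. length x \<ge> n1 \<Longrightarrow> w x \<le> g ^ length x" and g0: "0 < g" and g1: "g \<le> 1"
    and b1: "1 \<le> b" and nb: "4 * b \<le> n" and bn1: "n1 \<le> b" and nL: "n \<le> L" and E0: "E \<ge> 0"
    and Q: "\<And>u v. (u, v) \<in> Q \<Longrightarrow> length u = L + n \<and> length v = L + n \<and> take n u = drop L u \<and>
              take n v = drop L v \<and> w (take n u) \<le> E \<and> w (take n v) \<le> E \<and>
              card (subwords n u \<union> subwords n v) = j"
  shows "(\<Sum>p\<in>Q. w (fst p) * w (snd p)) \<le> real (L * L * (2 * L + 1) ^ (4 * (L div b + 1))) *
     K ^ (4 + 4 * (L div b + 1)) * E ^ 2 *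
     g powr (real (2 * L - j) * (1 - 2 * real (n - 1) / real (card {m. m < L \<and> (m = 0 \<or> (b \<le> m \<and> m + b \<le> L))})))"
proof -
  define Al where "Al = {m. m < L \<and> (m = 0 \<or> (b \<le> m \<and> m + b \<le> L))}"
  define lens where "lens mu mv = plens b (L - mu) @ plens b mu @ plens b (L - mv) @ plens b mv" for mu mv
  define Bs where "Bs = insert None (Some ` {..<2 * L})"
  define Sk where "Sk = Sigma (Al \<times> Al) (\<lambda>(mu, mv). {os. set os \<subseteq> Bs \<and> length os = length (lens mu mv)})"
  define e where "e = 2 * L - j"
  define Ac where "Ac = card Al"
  define cr where "cr s = credit (zip (lens (fst (fst s)) (snd (fst s))) (snd s))" for s :: "(nat \<times> nat) \<times> nat option list"
  define Sk' where "Sk' = {s\<in>Sk. Ac * e \<le> Ac * cr s + 2 * (n - 1) * e}"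
  define Tp where "Tp mu mv p = rotate mu (take L (fst p)) @ rotate mv (take L (snd p))" for mu mv and p :: "'a list \<times> 'a list"
  define good where "good s p \<longleftrightarrow> valid (zip (lens (fst (fst s)) (snd (fst s))) (snd s)) (Tp (fst (fst s)) (snd (fst s)) p)" for s p
  define Nmax where "Nmax = 4 * (L div b + 1)"
  define th where "th = 1 - 2 * real (n - 1) / real Ac"
  define bound where "bound = K ^ (4 + Nmax) * E ^ 2 * g powr (real e * th)"
  have L0: "0 < L" using b1 nb nL by simp
  have AlL: "Al \<subseteq> {..<L}" by (auto simp: Al_def)
  have finAl: "finite Al" using AlL finite_subset by blast
  have Al0: "0 \<in> Al" using L0 by (simp add: Al_def)
  have Ac1: "Ac \<ge> 1" using finAl Al0 by (simp add: Ac_def Suc_le_eq card_gt_0_iff) blast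
  have AcL: "Ac \<le> L" using card_mono[OF _ AlL] by (simp add: Ac_def)
  have K0: "K \<ge> 0" using K1 by simp
  have wnil: "w [] \<le> 1" using w1[of 0] by simp
  have finL: "finite {x::'a list. length x = m}" for m
    using finite_lists_length_eq[of "UNIV::'a set" m] by simp
  have finQ: "finite Q"
  proof -
    have "Q \<subseteq> {x::'a list. length x = L + n} \<times> {x::'a list. length x = L + n}" using Q by auto
    then show ?thesis using finL finite_subset by blast
  qed
  have finBs: "finite Bs" by (simp add: Bs_def)
  have finSk: "finite Sk" unfolding Sk_def
    using finAl finBs by (intro finite_SigmaI) (auto intro: finite_lists_length_eq)
  have lens_len: "length (lens mu mv) \<le> Nmax" if "mu \<le> L" "mv \<le> L" for mu mv
  proof -
    have hh: "length (plens b x) \<le> L div b + 1" if "x \<le> L" for x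
      using length_plens[of b x] b1 div_le_mono[OF that, of b] by simp
    note h = hh[of "L - mu"] hh[of mu] hh[of "L - mv"] hh[of mv]
    show ?thesis using h that by (simp add: lens_def Nmax_def)
  qed
  have decomp: "u = take L u @ take n (take L u)" if "(u, v) \<in> Q" for u v
  proof -
    have "take n u = drop L u" using Q[OF that] by simp
    then show ?thesis using nL by (metis append_take_drop_id min.absorb1 take_take)
  qed
  have decompv: "v = take L v @ take n (take L v)" if "(u, v) \<in> Q" for u v
  proof -
    have "take n v = drop L v" using Q[OF that] by simp
    then show ?thesis using nL by (metis append_take_drop_id min.absorb1 take_take)
  qed
  have cov: "\<exists>s\<in>Sk'. good s p" if p: "p \<in> Q" for p
  proof -
    obtain u v where uv: "p = (u, v)" by fastforce
    have Qp: "(u, v) \<in> Q" using p uv by simp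
    define cu where "cu = take L u"
    define cv where "cv = take L v"
    have lcu: "length cu = L" and lcv: "length cv = L" using Q[OF Qp] by (auto simp: cu_def cv_def)
    have su: "subwords n u = cw n cu ` {..<L}"
      using sub_cw[OF lcu nL L0] decomp[OF Qp] by (simp add: cu_def)
    have sv: "subwords n v = cw n cv ` {..<L}"
      using sub_cw[OF lcv nL L0] decompv[OF Qp] by (simp add: cv_def)
    have cj: "card (cw n cu ` {..<L} \<union> cw n cv ` {..<L}) = j" using Q[OF Qp] su sv by simp
    obtain mu mv os where mu: "mu \<in> Al" and mv: "mv \<in> Al"
      and os: "length os = length (lens mu mv)" "set os \<subseteq> Bs"
        "valid (zip (lens mu mv) os) (rotate mu cu @ rotate mv cv)"
        "Ac * e \<le> Ac * credit (zip (lens mu mv) os) + 2 * (n - 1) * e"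
      using pair_comb[OF lcu lcv b1 nb nL, unfolded cj, folded Al_def lens_def Bs_def Ac_def e_def]
      by blast
    define s where "s = ((mu, mv), os)"
    have "s \<in> Sk" using mu mv os by (simp add: s_def Sk_def)
    then have "s \<in> Sk'" using os by (simp add: Sk'_def s_def cr_def)
    moreover have "good s p" using os by (simp add: good_def s_def Tp_def uv cu_def cv_def)
    ultimately show ?thesis by blast
  qed
  have per: "(\<Sum>p\<in>{p\<in>Q. good s p}. w (fst p) * w (snd p)) \<le> bound" if s: "s \<in> Sk'" for s
  proof -
    obtain mu mv os where sd: "s = ((mu, mv), os)" by (metis prod.collapse)
    have mu: "mu \<in> Al" and mv: "mv \<in> Al" and los: "length os = length (lens mu mv)"
      and osB: "set os \<subseteq> Bs" and crs: "Ac * e \<le> Ac * cr s + 2 * (n - 1) * e"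
      using s by (auto simp: Sk'_def Sk_def sd)
    define ls where "ls = lens mu mv"
    define bl where "bl = zip ls os"
    define Fv where "Fv T = (if valid bl T then prod_list (map w (splitl ls T)) else 0)" for T
    have mapbl: "map fst bl = ls" using los by (simp add: bl_def ls_def)
    have sls: "sum_list ls = 2 * L" using mu mv by (simp add: ls_def lens_def sum_plens Al_def)
    have mub: "x = 0 \<or> b \<le> x" if "x \<in> {L - mu, mu, L - mv, mv}" for x
      using that mu mv nb nL by (auto simp: Al_def)
    have sp: "b \<le> l" if "x \<in> {L - mu, mu, L - mv, mv}" "l \<in> set (plens b x)" for x l
      using set_plens[of b x l] b1 mub[OF that(1)] that(2) by simp
    have blb: "\<forall>(l, ob)\<in>set bl. ob \<noteq> None \<longrightarrow> l \<ge> n1"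
    proof (intro ballI)
      fix x assume "x \<in> set bl"
      then have "fst x \<in> set ls" unfolding bl_def by (metis set_zip_leftD prod.collapse)
      then have "b \<le> fst x" using sp[of "L - mu"] sp[of mu] sp[of "L - mv"] sp[of mv] by (auto simp: ls_def lens_def)
      then show "case x of (l, ob) \<Rightarrow> ob \<noteq> None \<longrightarrow> n1 \<le> l" using bn1 by (auto split: prod.splits)
    qed
    have SV: "(\<Sum>T\<in>{T. length T = 2 * L}. Fv T) \<le> g ^ credit bl"
      using sum_valid_le[OF w0 w1 wg less_imp_le[OF g0] blb, unfolded mapbl sls] by (simp add: Fv_def)
    have Fv0: "Fv T \<ge> 0" for T by (auto simp: Fv_def w0 intro!: prod_list_nonneg)
    have inj: "inj_on (Tp mu mv) Q"
    proof (rule inj_onI)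
      fix p p' assume p: "p \<in> Q" and p': "p' \<in> Q" and eq: "Tp mu mv p = Tp mu mv p'"
      obtain u v where uv: "p = (u, v)" by fastforce
      obtain u' v' where uv': "p' = (u', v')" by fastforce
      have Qs: "(u, v) \<in> Q" "(u', v') \<in> Q" using p p' uv uv' by auto
      have l: "length (take L u) = L" "length (take L u') = L" using Q[OF Qs(1)] Q[OF Qs(2)] by auto
      have "rotate mu (take L u) = rotate mu (take L u') \<and> rotate mv (take L v) = rotate mv (take L v')"
        using eq l by (simp add: Tp_def uv uv')
      then have "take L u = take L u'" "take L v = take L v'" using rotate_inj by blast+
      then have "u = u'" "v = v'" using decomp[OF Qs(1)] decomp[OF Qs(2)] decompv[OF Qs(1)] decompv[OF Qs(2)] by metis+
      then show "p = p'" using uv uv' by simp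
    qed
    have pw: "w (fst p) * w (snd p) \<le> K ^ (4 + Nmax) * E ^ 2 * Fv (Tp mu mv p)" if p: "p \<in> {p\<in>Q. good s p}" for p
    proof -
      obtain u v where uv: "p = (u, v)" by fastforce
      have Qp: "(u, v) \<in> Q" and gd: "valid bl (Tp mu mv p)" using p uv by (auto simp: good_def sd bl_def ls_def)
      have muL: "mu < L" and mvL: "mv < L" using mu mv by (auto simp: Al_def)
      define lsu where "lsu = plens b (L - mu) @ plens b mu"
      define lsv where "lsv = plens b (L - mv) @ plens b mv"
      have Qf: "length u = L + n" "take n u = drop L u" "w (take n u) \<le> E"
        "length v = L + n" "take n v = drop L v" "w (take n v) \<le> E" using Q[OF Qp] by auto
      have wu: "w u \<le> K ^ (2 + length (plens b (L - mu)) + length (plens b mu)) * E * prod_list (map w (splitl lsu (rotate mu (take L u))))"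
        using word_bound[OF w0 wnil wapp K0 Qf(1,2) nL muL Qf(3), of "plens b (L - mu)" "plens b mu"] muL
        by (simp add: sum_plens lsu_def)
      have wv: "w v \<le> K ^ (2 + length (plens b (L - mv)) + length (plens b mv)) * E * prod_list (map w (splitl lsv (rotate mv (take L v))))"
        using word_bound[OF w0 wnil wapp K0 Qf(4,5) nL mvL Qf(6), of "plens b (L - mv)" "plens b mv"] mvL
        by (simp add: sum_plens lsv_def)
      define Pu where "Pu = prod_list (map w (splitl lsu (rotate mu (take L u))))"
      define Pv where "Pv = prod_list (map w (splitl lsv (rotate mv (take L v))))"
      have Pu0: "Pu \<ge> 0" and Pv0: "Pv \<ge> 0" by (auto simp: Pu_def Pv_def w0 intro!: prod_list_nonneg)
      have lsuv: "ls = lsu @ lsv" by (simp add: ls_def lens_def lsu_def lsv_def)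
      have slsu: "length (rotate mu (take L u)) = sum_list lsu" using Q[OF Qp] muL by (simp add: lsu_def sum_plens)
      have FvT: "Fv (Tp mu mv p) = Pu * Pv"
        using gd splitl_append[OF slsu, of lsv "rotate mv (take L v)"]
        by (simp add: Fv_def Tp_def uv lsuv Pu_def Pv_def)
      define Ku where "Ku = K ^ (2 + length (plens b (L - mu)) + length (plens b mu))"
      define Kv where "Kv = K ^ (2 + length (plens b (L - mv)) + length (plens b mv))"
      have KuKv: "Ku * Kv \<le> K ^ (4 + Nmax)"
      proof -
        have "Ku * Kv = K ^ ((2 + length (plens b (L - mu)) + length (plens b mu)) + (2 + length (plens b (L - mv)) + length (plens b mv)))"
          unfolding Ku_def Kv_def by (rule power_add[symmetric])
        also have "\<dots> = K ^ (4 + length (lens mu mv))" by (rule arg_cong[where f="\<lambda>x. K ^ x"]) (simp add: lens_def)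
        finally have "Ku * Kv = K ^ (4 + length (lens mu mv))" .
        also have "\<dots> \<le> K ^ (4 + Nmax)" using lens_len[of mu mv] muL mvL K1 by (intro power_increasing) auto
        finally show ?thesis .
      qed
      have Ku0: "Ku \<ge> 0" "Kv \<ge> 0" using K0 by (auto simp: Ku_def Kv_def)
      have wu': "w u \<le> Ku * E * Pu" using wu by (simp add: Ku_def Pu_def)
      have wv': "w v \<le> Kv * E * Pv" using wv by (simp add: Kv_def Pv_def)
      have "w u * w v \<le> (Ku * E * Pu) * (Kv * E * Pv)"
        using wu' wv' w0 Ku0 E0 Pv0 Pu0 by (intro mult_mono) auto
      also have "\<dots> = (Ku * Kv) * (E ^ 2 * (Pu * Pv))" by (simp add: power2_eq_square algebra_simps)
      also have "\<dots> \<le> K ^ (4 + Nmax) * (E ^ 2 * (Pu * Pv))"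
        using KuKv E0 Pu0 Pv0 by (intro mult_right_mono) auto
      finally show ?thesis using FvT uv by (simp add: mult.assoc)
    qed
    have "(\<Sum>p\<in>{p\<in>Q. good s p}. w (fst p) * w (snd p)) \<le> (\<Sum>p\<in>{p\<in>Q. good s p}. K ^ (4 + Nmax) * E ^ 2 * Fv (Tp mu mv p))"
      by (rule sum_mono) (rule pw)
    also have "\<dots> = K ^ (4 + Nmax) * E ^ 2 * (\<Sum>p\<in>{p\<in>Q. good s p}. Fv (Tp mu mv p))"
      by (simp add: sum_distrib_left)
    also have "(\<Sum>p\<in>{p\<in>Q. good s p}. Fv (Tp mu mv p)) = (\<Sum>T\<in>Tp mu mv ` {p\<in>Q. good s p}. Fv T)"
      using inj by (subst sum.reindex) (auto intro: inj_on_subset)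
    also have "\<dots> \<le> (\<Sum>T\<in>{T. length T = 2 * L}. Fv T)"
    proof (rule sum_mono2)
      show "Tp mu mv ` {p \<in> Q. good s p} \<subseteq> {T. length T = 2 * L}"
        using Q by (auto simp: Tp_def)
    qed (use finL Fv0 in auto)
    also have "\<dots> \<le> g ^ credit bl" by (rule SV)
    also have "g ^ credit bl \<le> g powr (real e * th)"
    proof -
      have cre: "cr s = credit bl" by (simp add: cr_def sd bl_def ls_def)
      have "real Ac * real e \<le> real Ac * real (credit bl) + 2 * real (n - 1) * real e"
        using crs cre by (metis (mono_tags, opaque_lifting) of_nat_add of_nat_le_iff of_nat_mult of_nat_numeral)
      then have "real e * th \<le> real (credit bl)"
        using Ac1 by (simp add: th_def field_simps)
      then have "g powr real (credit bl) \<le> g powr (real e * th)"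
        using g0 g1 by (intro powr_mono') auto
      then show ?thesis using g0 by (simp add: powr_realpow)
    qed
    finally show ?thesis
      using E0 K0 by (simp add: bound_def mult_left_mono)
  qed
  have "(\<Sum>p\<in>Q. w (fst p) * w (snd p)) \<le> (\<Sum>s\<in>Sk'. \<Sum>p\<in>{p\<in>Q. good s p}. w (fst p) * w (snd p))"
    by (rule sum_cover[OF finQ]) (use finSk cov w0 in \<open>auto simp: Sk'_def\<close>)
  also have "\<dots> \<le> (\<Sum>s\<in>Sk'. bound)" by (rule sum_mono) (rule per)
  also have "\<dots> = real (card Sk') * bound" by simp
  also have "\<dots> \<le> real (L * L * (2 * L + 1) ^ Nmax) * bound"
  proof -
    have b0: "bound \<ge> 0" using K0 E0 g0 by (simp add: bound_def)
    have "card Sk' \<le> card Sk" using finSk by (intro card_mono) (auto simp: Sk'_def)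
    also have "card Sk = (\<Sum>m\<in>Al \<times> Al. card ((\<lambda>(mu, mv). {os. set os \<subseteq> Bs \<and> length os = length (lens mu mv)}) m))"
      unfolding Sk_def using finAl finBs by (intro card_SigmaI) (auto intro: finite_lists_length_eq)
    also have "\<dots> \<le> (\<Sum>m\<in>Al \<times> Al. (2 * L + 1) ^ Nmax)"
    proof (rule sum_mono)
      fix m assume m: "m \<in> Al \<times> Al"
      obtain mu mv where md: "m = (mu, mv)" by fastforce
      have cB: "card Bs = 2 * L + 1" by (simp add: Bs_def card_image)
      have "card {os. set os \<subseteq> Bs \<and> length os = length (lens mu mv)} = (2 * L + 1) ^ length (lens mu mv)"
        using card_lists_length_eq[OF finBs] cB by simp
      also have "\<dots> \<le> (2 * L + 1) ^ Nmax" using lens_len[of mu mv] m md by (intro power_increasing) (auto simp: Al_def)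
      finally show "card ((\<lambda>(mu, mv). {os. set os \<subseteq> Bs \<and> length os = length (lens mu mv)}) m) \<le> (2 * L + 1) ^ Nmax"
        by (simp add: md)
    qed
    also have "\<dots> = Ac * Ac * (2 * L + 1) ^ Nmax" by (simp add: Ac_def card_cartesian_product)
    also have "\<dots> \<le> L * L * (2 * L + 1) ^ Nmax" using AcL by (intro mult_right_mono mult_mono) auto
    finally have "card Sk' \<le> L * L * (2 * L + 1) ^ Nmax" .
    then have "real (card Sk') \<le> real (L * L * (2 * L + 1) ^ Nmax)" by (simp only: of_nat_le_iff)
    then show ?thesis using b0 by (intro mult_right_mono) auto
  qed
  finally show ?thesis by (simp add: bound_def Nmax_def e_def th_def Ac_def Al_def mult.assoc)
qed



lemma powr_ge_self: "(x::real) \<ge> 1 \<Longrightarrow> r \<ge> 1 \<Longrightarrow> x \<le> x powr r"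
proof -
  assume x: "x \<ge> 1" and r: "r \<ge> 1"
  have "x = x powr 1" using x by simp
  also have "\<dots> \<le> x powr r" using x r by (intro powr_mono) auto
  finally show ?thesis .
qed

lemma powr_mult4: "0 \<le> (a::real) \<Longrightarrow> 0 \<le> b \<Longrightarrow> 0 \<le> c \<Longrightarrow> 0 \<le> d \<Longrightarrow>
  a powr r * b powr r * c powr r * d powr r = (a * b * c * d) powr r"
  by (simp add: powr_mult)

lemma final_numeric:
  fixes n k L b :: nat and K \<gamma> :: real
  assumes n8: "n \<ge> 8" and kn: "n \<le> k" and kn2: "real k \<le> real n ^ 2" and L: "L = k - n" and b: "b = n div 4"
    and K1: "K \<ge> 1" and g0: "0 < \<gamma>" and g1: "\<gamma> \<le> 1"
  shows "real (L * L * (2 * L + 1) ^ (4 * (L div b + 1))) * K ^ (4 + 4 * (L div b + 1)) * (1 / \<gamma> ^ 2)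
     \<le> (3 ^ 36 * K ^ 40 / \<gamma> ^ 2 * real n ^ 76) powr (real k / real n)"
proof -
  define r where "r = real k / real n"
  define Nm where "Nm = 4 * (L div b + 1)"
  have n0: "real n > 0" using n8 by simp
  have r1: "r \<ge> 1" using kn n0 by (simp add: r_def)
  have bpos: "b > 0" using n8 b by simp
  have bn: "real n \<le> 8 * real b"
  proof -
    have "n \<le> 4 * (n div 4) + 3" by linarith
    then have "n \<le> 8 * b" using n8 b by linarith
    then show ?thesis by linarith
  qed
  have Lk: "real L \<le> real k" using L by simp
  have Ldiv: "real (L div b) \<le> 8 * r"
  proof -
    have "real (L div b) \<le> real L / real b" by (rule of_nat_div_le_of_nat)
    also have "\<dots> \<le> real k / (real n / 8)"
      using Lk bn bpos n0 by (intro frac_le) auto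
    also have "\<dots> = 8 * r" by (simp add: r_def)
    finally show ?thesis .
  qed
  have Nmr: "real Nm \<le> 36 * r" using Ldiv r1 by (simp add: Nm_def)
  have a: "real (L * L) \<le> (real n ^ 4) powr r"
  proof -
    have "real (L * L) \<le> real k * real k" using Lk by (simp add: mult_mono)
    also have "\<dots> \<le> real n ^ 2 * real n ^ 2" using kn2 by (intro mult_mono) auto
    also have "\<dots> = real n ^ 4" by (simp add: power_add[symmetric])
    also have "\<dots> \<le> (real n ^ 4) powr r" using n8 r1 by (intro powr_ge_self) auto
    finally show ?thesis .
  qed
  have bb: "real ((2 * L + 1) ^ Nm) \<le> ((3 * real n ^ 2) ^ 36) powr r"
  proof -
    have base: "real (2 * L + 1) \<le> 3 * real n ^ 2"
    proof -
      have h: "real L \<le> real n ^ 2" using Lk kn2 by linarith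
      have h1: "1 \<le> real n ^ 2" using n8 by simp
      have "real (2 * L + 1) = 2 * real L + 1" by simp
      then show ?thesis using h h1 by linarith
    qed
    have "real ((2 * L + 1) ^ Nm) = real (2 * L + 1) ^ Nm" by simp
    also have "\<dots> \<le> (3 * real n ^ 2) ^ Nm" using base by (intro power_mono) auto
    also have "\<dots> = (3 * real n ^ 2) powr real Nm" using n0 by (simp add: powr_realpow)
    also have "\<dots> \<le> (3 * real n ^ 2) powr (36 * r)"
    proof (rule powr_mono[OF Nmr])
      have "1 \<le> real n ^ 2" using n8 by simp
      then show "1 \<le> 3 * real n ^ 2" by simp
    qed
    also have "\<dots> = ((3 * real n ^ 2) powr 36) powr r" by (simp only: powr_powr mult.commute)
    also have "\<dots> = ((3 * real n ^ 2) ^ 36) powr r" by (subst powr_numeral) auto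
    finally show ?thesis .
  qed
  have c: "K ^ (4 + Nm) \<le> (K ^ 40) powr r"
  proof -
    have "K ^ (4 + Nm) = K powr real (4 + Nm)" by (rule powr_realpow[symmetric]) (use K1 in simp)
    also have "\<dots> \<le> K powr (40 * r)" using Nmr r1 K1 by (intro powr_mono) auto
    also have "\<dots> = (K powr 40) powr r" by (simp only: powr_powr mult.commute)
    also have "\<dots> = (K ^ 40) powr r" using K1 by (subst powr_numeral) auto
    finally show ?thesis .
  qed
  have d: "1 / \<gamma> ^ 2 \<le> (1 / \<gamma> ^ 2) powr r"
    using g0 g1 r1 by (intro powr_ge_self) (auto simp: power_le_one)
  have "real (L * L * (2 * L + 1) ^ Nm) * K ^ (4 + Nm) * (1 / \<gamma> ^ 2)
      = real (L * L) * real ((2 * L + 1) ^ Nm) * K ^ (4 + Nm) * (1 / \<gamma> ^ 2)" by simp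
  also have "\<dots> \<le> (real n ^ 4) powr r * ((3 * real n ^ 2) ^ 36) powr r * (K ^ 40) powr r * (1 / \<gamma> ^ 2) powr r"
    using a bb c d K1 g0 by (intro mult_mono) auto
  also have "\<dots> = (real n ^ 4 * (3 * real n ^ 2) ^ 36 * K ^ 40 * (1 / \<gamma> ^ 2)) powr r"
    by (rule powr_mult4) (use n0 K1 g0 in auto)
  also have "real n ^ 4 * (3 * real n ^ 2) ^ 36 * K ^ 40 * (1 / \<gamma> ^ 2) = 3 ^ 36 * K ^ 40 / \<gamma> ^ 2 * real n ^ 76"
  proof -
    have "(3 * real n ^ 2) ^ 36 = 3 ^ 36 * real n ^ 72"
      by (simp add: power_mult_distrib power_mult[symmetric])
    moreover have "real n ^ 4 * real n ^ 72 = real n ^ 76" by (simp flip: power_add)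
    ultimately show ?thesis by (simp add: algebra_simps)
  qed
  finally show ?thesis by (simp add: r_def Nm_def)
qed



lemma gamma_bound:
  fixes g \<gamma> \<theta> e :: real
  assumes g0: "0 < g" and gg: "g < \<gamma>" and g1: "\<gamma> < 1" and th: "\<theta> \<ge> ln \<gamma> / ln g" and e0: "e \<ge> 0"
  shows "g powr (e * \<theta>) \<le> \<gamma> powr e"
proof -
  have lg: "ln g < 0" using g0 gg g1 by simp
  have "\<theta> * ln g \<le> (ln \<gamma> / ln g) * ln g" using th lg by (intro mult_right_mono_neg) auto
  then have "\<theta> * ln g \<le> ln \<gamma>" using lg by simp
  then have "e * \<theta> * ln g \<le> e * ln \<gamma>" using e0 by (simp add: mult.assoc mult_left_mono)
  then show ?thesis using g0 gg by (simp add: powr_def)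
qed

lemma card_Al:
  assumes "1 \<le> b" "2 * b \<le> L"
  shows "L - 2 * b + 1 \<le> card {m. m < L \<and> (m = 0 \<or> (b \<le> m \<and> m + b \<le> L))}"
proof -
  have "{b..L - b} \<subseteq> {m. m < L \<and> (m = 0 \<or> (b \<le> m \<and> m + b \<le> L))}" using assms by auto
  then have "card {b..L - b} \<le> card {m. m < L \<and> (m = 0 \<or> (b \<le> m \<and> m + b \<le> L))}"
    by (intro card_mono) auto
  then show ?thesis using assms by simp
qed

lemma E_bound:
  assumes "u \<in> E_set X \<mu> \<delta> n" and "n \<ge> 1"
  shows "cp \<mu> X u \<le> exp (- real n * (ks_entropy X \<mu> - \<delta>))"
proof (cases "cp \<mu> X u = 0")
  case True then show ?thesis by simp
next
  case False
  then have pos: "cp \<mu> X u > 0" using cp_nonneg[of \<mu> X u] by simp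
  have "\<bar>- (1 / real n) * ln (cp \<mu> X u) - ks_entropy X \<mu>\<bar> < \<delta>" using assms by (simp add: E_set_def)
  then have "- (1 / real n) * ln (cp \<mu> X u) > ks_entropy X \<mu> - \<delta>" by linarith
  then have "ln (cp \<mu> X u) < - real n * (ks_entropy X \<mu> - \<delta>)" using assms(2)
    by (simp add: field_simps)
  then have "cp \<mu> X u < exp (- real n * (ks_entropy X \<mu> - \<delta>))" using pos
    by (metis exp_less_cancel_iff exp_ln)
  then show ?thesis by simp
qed

lemma lang_length: "u \<in> lang X m \<Longrightarrow> length u = m"
  by (auto simp: lang_def)



theorem mainTheorem10:
  fixes X :: "(int \<Rightarrow> 'a::finite) set" and f :: "(int \<Rightarrow> 'a) \<Rightarrow> real"
    and \<mu> :: "(int \<Rightarrow> 'a) measure" and K \<alpha> \<gamma> \<delta> :: real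
    and n0 :: nat and k :: "nat \<Rightarrow> nat"
  assumes sft: "is_sft X" and mixing: "topologically_mixing X"
    and nontrivial: "\<exists>x\<in>X. \<exists>y\<in>X. x \<noteq> y"
    and hoelder: "holder X f"
    and gibbs: "gibbs_measure X f \<mu>"
    and K_gt: "K > 1"
    and K_gibbs: "\<forall>m\<ge>1. \<forall>x\<in>X.
        inverse K \<le> cp \<mu> X (word_at x 0 m) / exp (- pressure X f * real m + birkhoff f m x) \<and>
        cp \<mu> X (word_at x 0 m) / exp (- pressure X f * real m + birkhoff f m x) \<le> K"
    and K_qb: "\<forall>u v. u @ v \<in> lang_all X \<longrightarrow>
        cp \<mu> X (u @ v) \<le> K * cp \<mu> X u * cp \<mu> X v \<and>
        cp \<mu> X (u @ v) / cp \<mu> X u \<le> K * cp \<mu> X v"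
    and alpha: "gamma0 X \<mu> < \<alpha>" "\<alpha> \<le> 1"
    and gamma: "gamma0 X \<mu> < \<gamma>" "\<gamma> < \<alpha>"
    and n0: "\<forall>u\<in>lang_all X. length u \<ge> n0 \<longrightarrow> cp \<mu> X u \<le> \<gamma> ^ length u"
    and delta: "0 < \<delta>" "\<delta> < ln (\<alpha> / \<gamma>) / 4"
    and k1: "(\<lambda>n. real n / real (k n)) \<longlonglongrightarrow> 0"
    and k2: "(\<lambda>n. real (k n)) \<in> o(\<lambda>n. real n ^ 2 / ln (real n))"
  shows "\<exists>p :: real poly. \<exists>N. \<forall>n\<ge>N. poly p (real n) > 0 \<and>
    (\<forall>j. 1 \<le> j \<and> j \<le> 2 * (k n - n + 1) \<longrightarrow>
      prodmeas \<mu> X (Qj_set X \<mu> \<delta> n (k n) j)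
        \<le> poly p (real n) powr (real (k n) / real n)
           * exp (- 2 * real n * (ks_entropy X \<mu> - \<delta>))
           * \<gamma> ^ (2 * (k n - n + 1) - j))"
proof -
  have sip: "shift_invariant_prob X \<mu>" using gibbs by (simp add: gibbs_measure_def)
  have K0: "K > 0" using K_gt by simp
  have K1: "K \<ge> 1" using K_gt by simp
  have w0: "\<And>x. cp \<mu> X x \<ge> 0" by (rule cp_nonneg)
  have w1: "\<And>m. (\<Sum>x\<in>{x::'a list. length x = m}. cp \<mu> X x) \<le> 1" by (rule cp_sum_le1[OF sip])
  have wapp: "\<And>x y. cp \<mu> X (x @ y) \<le> K * cp \<mu> X x * cp \<mu> X y" by (rule cp_append[OF K_qb K0])
  obtain x0 where x0: "x0 \<in> X" using nontrivial by blast
  have gpos: "0 < \<gamma>"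
  proof -
    define m where "m = 2 * n0 + 1"
    define u0 where "u0 = word_at x0 0 m"
    have "inverse K \<le> cp \<mu> X u0 / exp (- pressure X f * real m + birkhoff f m x0)"
    proof -
      have m1: "m \<ge> 1" by (simp add: m_def)
      show ?thesis using K_gibbs m1 x0 unfolding u0_def by blast
    qed
    moreover have "inverse K > 0" using K0 by simp
    ultimately have "cp \<mu> X u0 / exp (- pressure X f * real m + birkhoff f m x0) > 0" by linarith
    then have cpos: "cp \<mu> X u0 > 0" by (simp add: zero_less_divide_iff)
    have "u0 \<in> lang X m" using x0 by (auto simp: lang_def u0_def)
    then have "u0 \<in> lang_all X" by (auto simp: lang_all_def)
    moreover have "length u0 \<ge> n0" by (simp add: u0_def m_def)
    ultimately have "cp \<mu> X u0 \<le> \<gamma> ^ length u0" using n0 by blast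
    then have "0 < \<gamma> ^ m" using cpos by (simp add: u0_def)
    moreover have "odd m" by (simp add: m_def)
    ultimately show ?thesis unfolding zero_less_power_eq by auto
  qed
  define S where "S = {g::real. g > 0 \<and> (\<exists>n0. \<forall>m\<ge>n0. \<forall>u\<in>lang X m. cp \<mu> X u \<le> g ^ m)}"
  have gS: "\<gamma> \<in> S"
  proof -
    have "\<forall>m\<ge>n0. \<forall>u\<in>lang X m. cp \<mu> X u \<le> \<gamma> ^ m"
    proof (intro allI impI ballI)
      fix m u assume m: "m \<ge> n0" and u: "u \<in> lang X m"
      then have "u \<in> lang_all X" "length u = m" by (auto simp: lang_all_def lang_length)
      then show "cp \<mu> X u \<le> \<gamma> ^ m" using n0 m by auto
    qed
    then show ?thesis using gpos by (auto simp: S_def)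
  qed
  have "gamma0 X \<mu> = Inf S" by (simp add: gamma0_def S_def)
  then have "Inf S < \<gamma>" using gamma(1) by simp
  then obtain g where gS': "g \<in> S" and gg: "g < \<gamma>" using cInf_lessD[of S \<gamma>] gS by blast
  then obtain n1 where g0: "g > 0" and gn1: "\<forall>m\<ge>n1. \<forall>u\<in>lang X m. cp \<mu> X u \<le> g ^ m"
    by (auto simp: S_def)
  have wg: "\<And>x. length x \<ge> n1 \<Longrightarrow> cp \<mu> X x \<le> g ^ length x"
  proof -
    fix x :: "'a list" assume x: "length x \<ge> n1"
    show "cp \<mu> X x \<le> g ^ length x"
    proof (cases "x \<in> lang X (length x)")
      case True then show ?thesis using gn1 x by blast
    next
      case False
      then have "x \<notin> lang_all X" by (auto simp: lang_all_def dest: lang_length)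
      then show ?thesis using g0 by (simp add: cp_zero)
    qed
  qed
  have g1: "\<gamma> < 1" using gamma(2) alpha(2) by simp
  define h where "h = ks_entropy X \<mu>"
  define th0 where "th0 = ln \<gamma> / ln g"
  have lng: "ln g < ln \<gamma>" "ln \<gamma> < 0" using g0 gg g1 by auto
  have th01: "th0 < 1" using lng by (simp add: th0_def divide_less_eq)
  define C where "C = 2 / (1 - th0) + 1"
  have C0: "C > 0"
  proof -
    have "2 / (1 - th0) > 0" using th01 by simp
    then show ?thesis unfolding C_def by linarith
  qed
  have C1: "(1 - th0) * C \<ge> 2"
  proof -
    have nz: "1 - th0 \<noteq> 0" using th01 by simp
    have "(1 - th0) * C = (1 - th0) * (2 / (1 - th0)) + (1 - th0)" by (simp add: C_def distrib_left)
    also have "(1 - th0) * (2 / (1 - th0)) = 2" using nz by (metis nonzero_mult_div_cancel_left times_divide_eq_right)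
    finally have "(1 - th0) * C = 2 + (1 - th0)" .
    then show ?thesis using th01 by linarith
  qed
  define A where "A = 3 ^ 36 * K ^ 40 / \<gamma> ^ 2"
  have A0: "A > 0" using K0 gpos by (simp add: A_def)
  define p where "p = monom A 76"
  have ev1: "eventually (\<lambda>n. n \<ge> 8 + 4 * n1) sequentially" by (rule eventually_ge_at_top)
  have ev2: "eventually (\<lambda>n. real n / real (k n) < 1 / (C + 2)) sequentially"
    using order_tendstoD(2)[OF k1, of "1 / (C + 2)"] C0 by simp
  have ev3: "eventually (\<lambda>n. real (k n) \<le> real n ^ 2) sequentially"
  proof -
    have "eventually (\<lambda>n. norm (real (k n)) \<le> 1 * norm (real n ^ 2 / ln (real n))) at_top"
      using landau_o.smallD[OF k2, of 1] by simp
    moreover have "eventually (\<lambda>n::nat. n \<ge> 3) at_top" by (rule eventually_ge_at_top)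
    ultimately show ?thesis
    proof (eventually_elim)
      case (elim n)
      have n3: "real n \<ge> 3" using elim(2) by simp
      have "exp 1 \<le> real n" using exp_le n3 by linarith
      then have ln1: "ln (real n) \<ge> 1" using n3 by (metis ln_exp ln_le_cancel_iff exp_gt_zero less_le_trans)
      have "real (k n) \<le> real n ^ 2 / ln (real n)" using elim(1) ln1 by simp
      also have "\<dots> \<le> real n ^ 2" using ln1 by (simp add: divide_le_eq) (use ln1 in \<open>simp add: mult_le_cancel_left1\<close>)
      finally show ?case .
    qed
  qed
  obtain N where N: "\<And>n. n \<ge> N \<Longrightarrow> n \<ge> 8 + 4 * n1 \<and> real n / real (k n) < 1 / (C + 2) \<and> real (k n) \<le> real n ^ 2"
    using eventually_conj[OF ev1 eventually_conj[OF ev2 ev3]] unfolding eventually_sequentially by blast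
  show ?thesis
  proof (intro exI[of _ p] exI[of _ N] allI impI conjI)
    fix n assume nN: "n \<ge> N"
    have n8: "n \<ge> 8 + 4 * n1" and kr: "real n / real (k n) < 1 / (C + 2)" and kn2: "real (k n) \<le> real n ^ 2"
      using N[OF nN] by auto
    have n0': "real n > 0" using n8 by simp
    show ppos: "poly p (real n) > 0" using A0 n0' by (simp add: p_def poly_monom)
    fix j assume j: "1 \<le> j \<and> j \<le> 2 * (k n - n + 1)"
    define RHS where "RHS = poly p (real n) powr (real (k n) / real n) * exp (- 2 * real n * (ks_entropy X \<mu> - \<delta>)) * \<gamma> ^ (2 * (k n - n + 1) - j)"
    have RHS0: "RHS \<ge> 0" using gpos by (simp add: RHS_def)
    show "prodmeas \<mu> X (Qj_set X \<mu> \<delta> n (k n) j) \<le> poly p (real n) powr (real (k n) / real n) * exp (- 2 * real n * (ks_entropy X \<mu> - \<delta>)) * \<gamma> ^ (2 * (k n - n + 1) - j)"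
      unfolding RHS_def[symmetric]
    proof (cases "k n = 0")
      case True
      have "Qj_set X \<mu> \<delta> n (k n) j = {}"
      proof (rule ccontr)
        assume "Qj_set X \<mu> \<delta> n (k n) j \<noteq> {}"
        then obtain u v where "(u, v) \<in> Qj_set X \<mu> \<delta> n (k n) j" by auto
        then have "u \<in> lang X 0" "take n u \<in> lang X n"
          using True by (auto simp: Qj_set_def Q_set_def G_set_def E_set_def)
        then have "length u = 0" "length (take n u) = n" by (auto dest: lang_length)
        then show False using n8 by simp
      qed
      then show "prodmeas \<mu> X (Qj_set X \<mu> \<delta> n (k n) j) \<le> RHS" using RHS0 by (simp add: prodmeas_def)
    next
      case False
      then have kpos: "real (k n) > 0" by simp
      have kC: "(C + 2) * real n \<le> real (k n)" using kr kpos C0 by (simp add: field_simps)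
      define L where "L = k n - n"
      have "1 * real n \<le> (C + 2) * real n" using C0 n0' by (intro mult_right_mono) auto
      then have "real n \<le> real (k n)" using kC by linarith
      then have nk: "n \<le> k n" by simp
      have knL: "k n = L + n" using nk by (simp add: L_def)
      have "real L = real (k n) - real n" using nk by (simp add: L_def of_nat_diff)
      then have LC: "real L \<ge> (C + 1) * real n" using kC by (simp add: algebra_simps)
      have nL: "n \<le> L" using LC C0 n0' by (smt (verit, ccfv_SIG) of_nat_le_iff mult_le_cancel_right1)
      define b where "b = n div 4"
      have b1: "1 \<le> b" and nb: "4 * b \<le> n" and bn1: "n1 \<le> b" using n8 by (auto simp: b_def)
      define E where "E = exp (- real n * (h - \<delta>))"
      define Q where "Q = Qj_set X \<mu> \<delta> n (k n) j"
      have Qc: "length u = L + n \<and> length v = L + n \<and> take n u = drop L u \<and>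
              take n v = drop L v \<and> cp \<mu> X (take n u) \<le> E \<and> cp \<mu> X (take n v) \<le> E \<and>
              card (subwords n u \<union> subwords n v) = j" if uv: "(u, v) \<in> Q" for u v
      proof -
        have G: "u \<in> G_set X \<mu> \<delta> n (k n)" "v \<in> G_set X \<mu> \<delta> n (k n)" and cj: "card (subwords n u \<union> subwords n v) = j"
          using uv by (auto simp: Q_def Qj_set_def Q_set_def)
        have "length u = k n" "length v = k n" using G by (auto simp: G_set_def dest: lang_length)
        moreover have "take n u = drop L u" "take n v = drop L v" using G by (auto simp: G_set_def L_def)
        moreover have "cp \<mu> X (take n u) \<le> E" "cp \<mu> X (take n v) \<le> E"
          using G E_bound[of _ X \<mu> \<delta> n] n8 by (auto simp: G_set_def E_def h_def)
        ultimately show ?thesis using cj knL by simp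
      qed
      have E0: "E \<ge> 0" by (simp add: E_def)
      define Al where "Al = {m. m < L \<and> (m = 0 \<or> (b \<le> m \<and> m + b \<le> L))}"
      define th where "th = 1 - 2 * real (n - 1) / real (card Al)"
      define e where "e = 2 * L - j"
      have MB: "(\<Sum>p\<in>Q. cp \<mu> X (fst p) * cp \<mu> X (snd p)) \<le> real (L * L * (2 * L + 1) ^ (4 * (L div b + 1))) *
         K ^ (4 + 4 * (L div b + 1)) * E ^ 2 * g powr (real e * th)"
        using main_bound[OF w0 w1 wapp K1 wg g0 _ b1 nb bn1 nL E0 Qc] gg g1
        unfolding th_def e_def Al_def by simp
      have cAl: "real (card Al) \<ge> C * real n"
      proof -
        have "2 * b \<le> L" using nb nL by simp
        then have "L - 2 * b + 1 \<le> card Al" using card_Al[OF b1] by (simp add: Al_def)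
        then have "real L - 2 * real b \<le> real (card Al)" by linarith
        moreover have "2 * real b \<le> real n" using nb by simp
        ultimately show ?thesis using LC by (simp add: algebra_simps)
      qed
      have thge: "th \<ge> th0"
      proof -
        have cA0: "real (card Al) > 0" using cAl C0 n0' by (smt (verit) mult_pos_pos)
        have "2 * real (n - 1) \<le> (1 - th0) * real (card Al)"
        proof -
          have "2 * real (n - 1) \<le> 2 * real n" by simp
          also have "\<dots> \<le> (1 - th0) * C * real n" using C1 n0' by (simp add: mult_right_mono)
          also have "\<dots> \<le> (1 - th0) * real (card Al)" using cAl th01 by (simp add: mult.assoc mult_left_mono)
          finally show ?thesis .
        qed
        then have "2 * real (n - 1) / real (card Al) \<le> 1 - th0" using cA0 by (simp add: divide_le_eq)
        then show ?thesis by (simp add: th_def)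
      qed
      have GB: "g powr (real e * th) \<le> \<gamma> ^ e"
        using gamma_bound[OF g0 gg g1 _, of th "real e"] thge gpos by (simp add: th0_def powr_realpow)
      have ge2: "\<gamma> ^ e * \<gamma> ^ 2 \<le> \<gamma> ^ (2 * (k n - n + 1) - j)"
      proof -
        have "\<gamma> ^ e * \<gamma> ^ 2 = \<gamma> ^ (e + 2)" by (rule power_add[symmetric])
        also have "\<dots> \<le> \<gamma> ^ (2 * (k n - n + 1) - j)"
          using gpos g1 by (intro power_decreasing) (auto simp: e_def L_def)
        finally show ?thesis .
      qed
      have FN: "real (L * L * (2 * L + 1) ^ (4 * (L div b + 1))) * K ^ (4 + 4 * (L div b + 1)) * (1 / \<gamma> ^ 2)
         \<le> poly p (real n) powr (real (k n) / real n)"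
      proof -
        have n8': "n \<ge> 8" using n8 by simp
        have pp: "poly p (real n) = A * real n ^ 76" by (simp only: p_def poly_monom)
        show ?thesis
          using final_numeric[OF n8' nk kn2 L_def b_def K1 gpos less_imp_le[OF g1]]
          unfolding pp A_def .
      qed
      have E2: "E ^ 2 = exp (- 2 * real n * (ks_entropy X \<mu> - \<delta>))"
      proof -
        have "E ^ 2 = exp (- real n * (h - \<delta>)) * exp (- real n * (h - \<delta>))" by (simp add: E_def power2_eq_square)
        also have "\<dots> = exp (- real n * (h - \<delta>) + - real n * (h - \<delta>))" by (rule exp_add[symmetric])
        also have "- real n * (h - \<delta>) + - real n * (h - \<delta>) = - 2 * real n * (ks_entropy X \<mu> - \<delta>)"
          by (simp add: h_def algebra_simps)
        finally show ?thesis .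
      qed
      define M where "M = real (L * L * (2 * L + 1) ^ (4 * (L div b + 1))) * K ^ (4 + 4 * (L div b + 1))"
      have M0: "M \<ge> 0" using K0 by (simp add: M_def)
      have "prodmeas \<mu> X Q = (\<Sum>p\<in>Q. cp \<mu> X (fst p) * cp \<mu> X (snd p))"
        by (simp add: prodmeas_def split_def)
      also have "\<dots> \<le> M * E ^ 2 * g powr (real e * th)" using MB by (simp add: M_def)
      also have "\<dots> \<le> M * E ^ 2 * \<gamma> ^ e" using GB M0 E0 by (intro mult_left_mono) auto
      also have "\<dots> = (M * (1 / \<gamma> ^ 2)) * E ^ 2 * (\<gamma> ^ e * \<gamma> ^ 2)" using gpos by (simp add: field_simps power2_eq_square)
      also have "\<dots> \<le> poly p (real n) powr (real (k n) / real n) * E ^ 2 * \<gamma> ^ (2 * (k n - n + 1) - j)"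
      proof (rule mult_mono)
        show "M * (1 / \<gamma> ^ 2) * E ^ 2 \<le> poly p (real n) powr (real (k n) / real n) * E ^ 2"
          using FN E0 by (intro mult_right_mono) (auto simp: M_def)
      qed (use ge2 gpos in auto)
      finally show "prodmeas \<mu> X (Qj_set X \<mu> \<delta> n (k n) j) \<le> RHS" by (simp add: RHS_def Q_def E2)
    qed
  qed
qed


end
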